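(* Let $T$ be a tree on $n\ge4$ vertices, and let $c_0$ denote the largest positive root of the equation $$-c^3-\left(\frac{n^2-10n}{3}\right)c^2-(2n^2+n)c+\frac{4n^3-5n^2+4n}{3}=0.$$ Assume the diameter of $T$ is at least $c_0$. Let $G$ be a graph constructed from $T$ by adding an edge between two non-adjacent vertices so as to create a cycle of length $c>c_0$. Then $\mathcal{K}(G)<\mathcal{K}(T)$.
   Context: Kemeny's constant: for a connected graph $H$ with adjacency matrix $A$ and diagonal degree matrix $\Delta$, consider the random walk with transition matrix $\Delta^{-1}A$, its stationary distribution $w=(w_k)$ and mean first passage times $m_{j,k}$; then $\mathcal{K}(H)=\sum_{k\neq j} m_{j,k}w_k$, which is independent of $j$. *)

theory Defs
  imports Complex_Main
begin

definition simple_graph :: "'a set \<Rightarrow> 'a set set \<Rightarrow> bool" where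
  "simple_graph V E \<longleftrightarrow> finite V \<and>
     (\<forall>e\<in>E. \<exists>u v. u \<in> V \<and> v \<in> V \<and> u \<noteq> v \<and> e = {u, v})"

definition adj :: "'a set set \<Rightarrow> 'a \<Rightarrow> 'a \<Rightarrow> bool" where
  "adj E u v \<longleftrightarrow> {u, v} \<in> E"

definition walk :: "'a set set \<Rightarrow> 'a list \<Rightarrow> bool" where
  "walk E xs \<longleftrightarrow> xs \<noteq> [] \<and> (\<forall>i. i + 1 < length xs \<longrightarrow> adj E (xs ! i) (xs ! (i + 1)))"

definition connected_graph :: "'a set \<Rightarrow> 'a set set \<Rightarrow> bool" where
  "connected_graph V E \<longleftrightarrow> V \<noteq> {} \<and> (\<forall>u\<in>V. \<forall>v\<in>V. \<exists>xs. walk E xs \<and> set xs \<subseteq> V \<and> hd xs = u \<and> last xs = v)"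

definition is_cycle :: "'a set set \<Rightarrow> 'a list \<Rightarrow> bool" where
  "is_cycle E xs \<longleftrightarrow> length xs \<ge> 3 \<and> distinct xs \<and>
     (\<forall>i < length xs. adj E (xs ! i) (xs ! ((i + 1) mod length xs)))"

definition is_tree :: "'a set \<Rightarrow> 'a set set \<Rightarrow> bool" where
  "is_tree V E \<longleftrightarrow> simple_graph V E \<and> connected_graph V E \<and>
     \<not> (\<exists>xs. set xs \<subseteq> V \<and> is_cycle E xs)"

definition graph_dist :: "'a set set \<Rightarrow> 'a \<Rightarrow> 'a \<Rightarrow> nat" where
  "graph_dist E u v = (LEAST k. \<exists>xs. walk E xs \<and> hd xs = u \<and> last xs = v \<and> length xs = k + 1)"

definition diameter :: "'a set \<Rightarrow> 'a set set \<Rightarrow> nat" where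
  "diameter V E = Max {graph_dist E u v | u v. u \<in> V \<and> v \<in> V}"

definition degree :: "'a set set \<Rightarrow> 'a \<Rightarrow> nat" where
  "degree E v = card {u. adj E v u}"

definition adj_mat :: "'a set set \<Rightarrow> 'a \<Rightarrow> 'a \<Rightarrow> real" where
  "adj_mat E j k = (if adj E j k then 1 else 0)"

definition trans_mat :: "'a set set \<Rightarrow> 'a \<Rightarrow> 'a \<Rightarrow> real" where
  "trans_mat E j k = adj_mat E j k / real (degree E j)"

text \<open>Stationary distribution (unique for connected graphs).\<close>
definition stationary :: "'a set \<Rightarrow> 'a set set \<Rightarrow> 'a \<Rightarrow> real" where
  "stationary V E = (THE w. (\<forall>k\<in>V. w k \<ge> 0) \<and> (\<forall>k. k \<notin> V \<longrightarrow> w k = 0) \<and>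
      sum w V = 1 \<and> (\<forall>k\<in>V. (\<Sum>j\<in>V. w j * trans_mat E j k) = w k))"

primrec first_passage :: "'a set \<Rightarrow> 'a set set \<Rightarrow> nat \<Rightarrow> 'a \<Rightarrow> 'a \<Rightarrow> real" where
  "first_passage V E 0 j k = 0"
| "first_passage V E (Suc t) j k =
     (if t = 0 then trans_mat E j k
      else (\<Sum>l\<in>V - {k}. trans_mat E j l * first_passage V E t l k))"

definition mfpt :: "'a set \<Rightarrow> 'a set set \<Rightarrow> 'a \<Rightarrow> 'a \<Rightarrow> real" where
  "mfpt V E j k = (\<Sum>t. real t * first_passage V E t j k)"

text \<open>Kemeny's constant, evaluated at an (arbitrary) base vertex j; it is independent of j.\<close>
definition kemeny :: "'a set \<Rightarrow> 'a set set \<Rightarrow> real" where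
  "kemeny V E = (let j = (SOME j. j \<in> V) in
     (\<Sum>k\<in>V - {j}. mfpt V E j k * stationary V E k))"

definition cubic_c0 :: "nat \<Rightarrow> real" where
  "cubic_c0 n = Max {x::real. x > 0 \<and>
     - (x ^ 3) - ((real n^2 - 10 * real n) / 3) * x ^ 2 - (2 * real n^2 + real n) * x
     + (4 * real n^3 - 5 * real n^2 + 4 * real n) / 3 = 0}"

end

theory Submission
  imports Defs
begin


lemma adj_sym: "adj E u v = adj E v u" by (simp add: adj_def insert_commute)

definition nbrs :: "'a set set \<Rightarrow> 'a \<Rightarrow> 'a set" where "nbrs E x = {y. adj E x y}"

lemma degree_nbrs: "degree E x = card (nbrs E x)" by (simp add: degree_def nbrs_def)

lemma walk_single[simp]: "walk E [x]" by (simp add: walk_def)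

lemma walk_nonempty: "walk E xs \<Longrightarrow> xs \<noteq> []" by (simp add: walk_def)

lemma walk_Cons: "walk E (x # xs) \<longleftrightarrow> (xs = [] \<or> (adj E x (hd xs) \<and> walk E xs))"
proof
  assume w: "walk E (x # xs)"
  show "xs = [] \<or> (adj E x (hd xs) \<and> walk E xs)"
  proof (cases xs)
    case Nil then show ?thesis by simp
  next
    case (Cons y ys)
    have "adj E x y" using w Cons unfolding walk_def by (metis One_nat_def add.commute add_Suc_right length_Cons less_Suc_eq_0_disj list.size(4) nth_Cons_0 nth_Cons_Suc plus_1_eq_Suc zero_less_Suc)
    moreover have "walk E xs" unfolding walk_def
    proof (intro conjI allI impI)
      show "xs \<noteq> []" using Cons by simp
      fix i assume "i + 1 < length xs"
      then have "Suc i + 1 < length (x # xs)" by simp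
      then have "adj E ((x#xs) ! Suc i) ((x#xs) ! (Suc i + 1))" using w unfolding walk_def by blast
      then show "adj E (xs ! i) (xs ! (i + 1))" by simp
    qed
    ultimately show ?thesis using Cons by simp
  qed
next
  assume h: "xs = [] \<or> (adj E x (hd xs) \<and> walk E xs)"
  show "walk E (x # xs)"
  proof (cases "xs = []")
    case True then show ?thesis by simp
  next
    case False
    with h have a: "adj E x (hd xs)" and w: "walk E xs" by auto
    show ?thesis unfolding walk_def
    proof (intro conjI allI impI)
      show "x # xs \<noteq> []" by simp
      fix i assume i: "i + 1 < length (x # xs)"
      show "adj E ((x # xs) ! i) ((x # xs) ! (i + 1))"
      proof (cases i)
        case 0 then show ?thesis using a False by (simp add: hd_conv_nth)
      next
        case (Suc j)
        then have "j + 1 < length xs" using i by simp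
        then show ?thesis using w Suc unfolding walk_def by simp
      qed
    qed
  qed
qed

lemma walk_append: "walk E xs \<Longrightarrow> walk E ys \<Longrightarrow> adj E (last xs) (hd ys) \<Longrightarrow> walk E (xs @ ys)"
proof (induction xs)
  case Nil then show ?case by (simp add: walk_def)
next
  case (Cons x xs)
  show ?case
  proof (cases "xs = []")
    case True then show ?thesis using Cons.prems walk_nonempty[of E ys] by (simp add: walk_Cons)
  next
    case False
    then have "adj E x (hd xs)" "walk E xs" using Cons.prems(1) by (auto simp: walk_Cons)
    moreover have "walk E (xs @ ys)" using Cons False calculation by simp
    ultimately show ?thesis using False by (simp add: walk_Cons)
  qed
qed

lemma walk_rev: "walk E xs \<Longrightarrow> walk E (rev xs)"
proof (induction xs)
  case Nil then show ?case by (simp add: walk_def)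
next
  case (Cons x xs)
  show ?case
  proof (cases "xs = []")
    case True then show ?thesis by simp
  next
    case False
    then have "adj E x (hd xs)" "walk E xs" using Cons.prems by (auto simp: walk_Cons)
    then show ?thesis using Cons.IH False by (auto intro!: walk_append simp: last_rev adj_sym)
  qed
qed

lemma walk_take: "walk E xs \<Longrightarrow> 0 < n \<Longrightarrow> walk E (take n xs)"
  unfolding walk_def by auto

lemma walk_drop: "walk E xs \<Longrightarrow> n < length xs \<Longrightarrow> walk E (drop n xs)"
  unfolding walk_def by auto

lemma walk_join: "walk E xs \<Longrightarrow> walk E ys \<Longrightarrow> last xs = hd ys \<Longrightarrow> walk E (xs @ tl ys)"
proof (cases "tl ys = []")
  case True then show "walk E xs \<Longrightarrow> walk E ys \<Longrightarrow> last xs = hd ys \<Longrightarrow> walk E (xs @ tl ys)" by simp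
next
  case False
  assume w1: "walk E xs" and w2: "walk E ys" and l: "last xs = hd ys"
  obtain y ys' where ys: "ys = y # ys'" using w2 by (cases ys) (auto simp: walk_def)
  have "adj E y (hd ys')" "walk E ys'" using w2 False ys by (auto simp: walk_Cons)
  then show ?thesis using w1 l ys by (auto intro!: walk_append)
qed

lemma last_join: "ys \<noteq> [] \<Longrightarrow> last xs = hd ys \<Longrightarrow> xs \<noteq> [] \<Longrightarrow> last (xs @ tl ys) = last ys"
  by (cases ys) auto

locale sgraph =
  fixes V :: "'a set" and E :: "'a set set"
  assumes simple: "simple_graph V E" and conn: "connected_graph V E"
begin

lemma finV: "finite V" using simple by (simp add: simple_graph_def)

lemma adjD: "adj E x y \<Longrightarrow> x \<in> V \<and> y \<in> V \<and> x \<noteq> y"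
  using simple unfolding simple_graph_def adj_def by (metis doubleton_eq_iff)

lemma nbrs_sub: "nbrs E x \<subseteq> V" using adjD by (auto simp: nbrs_def)

lemma fin_nbrs: "finite (nbrs E x)" using nbrs_sub finV finite_subset by blast

lemma walk_set: assumes "walk E xs" "length xs \<ge> 2" shows "set xs \<subseteq> V"
proof
  fix y assume "y \<in> set xs"
  then obtain i where i: "i < length xs" "xs ! i = y" by (auto simp: in_set_conv_nth)
  show "y \<in> V"
  proof (cases "i + 1 < length xs")
    case True then show ?thesis using assms(1) i adjD unfolding walk_def by blast
  next
    case False
    then have "(i - 1) + 1 < length xs" "i - 1 + 1 = i" using i assms(2) by auto
    then show ?thesis using assms(1) i adjD unfolding walk_def by metis
  qed
qed

lemma walk_hd_V: assumes "walk E xs" "hd xs \<in> V" shows "set xs \<subseteq> V"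
proof (cases "length xs \<ge> 2")
  case True then show ?thesis using walk_set assms by blast
next
  case False
  obtain x ys where xs: "xs = x # ys" using walk_nonempty[OF assms(1)] by (cases xs) auto
  have "ys = []" using False xs by (cases ys) auto
  then show ?thesis using assms xs by simp
qed

lemma walk_exists: "a \<in> V \<Longrightarrow> b \<in> V \<Longrightarrow> \<exists>xs. walk E xs \<and> hd xs = a \<and> last xs = b"
  using conn unfolding connected_graph_def by blast

lemma dist_le: assumes "walk E xs" "hd xs = a" "last xs = b" shows "graph_dist E a b \<le> length xs - 1"
proof -
  have "length xs = (length xs - 1) + 1" using walk_nonempty[OF assms(1)] by (cases xs) auto
  then show ?thesis unfolding graph_dist_def using assms by (intro Least_le) blast
qed

lemma geo_exists: assumes "a \<in> V" "b \<in> V"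
  shows "\<exists>g. walk E g \<and> hd g = a \<and> last g = b \<and> length g = graph_dist E a b + 1"
proof -
  obtain xs where xs: "walk E xs" "hd xs = a" "last xs = b" using walk_exists assms by blast
  have "length xs = (length xs - 1) + 1" using walk_nonempty[OF xs(1)] by (cases xs) auto
  then have ex: "\<exists>k xs. walk E xs \<and> hd xs = a \<and> last xs = b \<and> length xs = k + 1" using xs by blast
  show ?thesis unfolding graph_dist_def by (rule LeastI_ex[OF ex])
qed

lemma dist_self[simp]: "graph_dist E a a = 0"
  using dist_le[of "[a]" a a] by simp

lemma dist_sym: assumes "a \<in> V" "b \<in> V" shows "graph_dist E a b = graph_dist E b a"
proof -
  have le: "graph_dist E x y \<le> graph_dist E y x" if xy: "x \<in> V" "y \<in> V" for x y
  proof -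
    obtain g where g: "walk E g" "hd g = y" "last g = x" "length g = graph_dist E y x + 1"
      using geo_exists[of y x] xy by blast
    have "g \<noteq> []" using g by (auto simp: walk_def)
    then have "graph_dist E x y \<le> length (rev g) - 1"
      using g by (intro dist_le) (auto simp: walk_rev hd_rev last_rev)
    then show ?thesis using g by simp
  qed
  show ?thesis using le[of a b] le[of b a] assms by simp
qed

lemma dist_triangle: assumes "a \<in> V" "b \<in> V" "c \<in> V"
  shows "graph_dist E a c \<le> graph_dist E a b + graph_dist E b c"
proof -
  obtain g1 where g1: "walk E g1" "hd g1 = a" "last g1 = b" "length g1 = graph_dist E a b + 1"
    using geo_exists assms by blast
  obtain g2 where g2: "walk E g2" "hd g2 = b" "last g2 = c" "length g2 = graph_dist E b c + 1"
    using geo_exists assms by blast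
  have ne: "g1 \<noteq> []" "g2 \<noteq> []" using g1 g2 by (auto simp: walk_def)
  have "walk E (g1 @ tl g2)" using g1 g2 by (intro walk_join) auto
  moreover have "hd (g1 @ tl g2) = a" using ne g1 by simp
  moreover have "last (g1 @ tl g2) = c" using ne g1 g2 last_join by metis
  ultimately have "graph_dist E a c \<le> length (g1 @ tl g2) - 1" by (rule dist_le)
  then show ?thesis using g1 g2 ne by simp
qed

lemma dist_adj: assumes "adj E a b" shows "graph_dist E a b = 1"
proof -
  have w: "walk E [a, b]" using assms by (simp add: walk_Cons)
  have le: "graph_dist E a b \<le> 1" using dist_le[OF w] by simp
  have "graph_dist E a b \<noteq> 0"
  proof
    assume z: "graph_dist E a b = 0"
    obtain g where g: "walk E g" "hd g = a" "last g = b" "length g = graph_dist E a b + 1"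
      using geo_exists adjD assms by blast
    then have "length g = 1" using z by simp
    then have "a = b" using g by (cases g) auto
    then show False using adjD assms by blast
  qed
  then show ?thesis using le by simp
qed

lemma dist_zero: assumes "a \<in> V" "b \<in> V" "graph_dist E a b = 0" shows "a = b"
proof -
  obtain g where g: "walk E g" "hd g = a" "last g = b" "length g = graph_dist E a b + 1"
    using geo_exists assms by blast
  then have "length g = 1" using assms by simp
  then show "a = b" using g by (cases g) auto
qed

lemma geo_prefix:
  assumes g: "walk E g" "hd g = a" "last g = b" "length g = graph_dist E a b + 1"
    and a: "a \<in> V" and i: "i < length g"
  shows "graph_dist E a (g ! i) = i" "graph_dist E (g ! i) b = graph_dist E a b - i" "g ! i \<in> V"
proof -
  have gV: "set g \<subseteq> V" using walk_hd_V g a by blast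
  have giV: "g ! i \<in> V" using gV i by auto
  have bV: "b \<in> V" using gV g walk_nonempty[OF g(1)] by auto
  have ne: "g \<noteq> []" using g by (auto simp: walk_def)
  have t1: "hd (take (Suc i) g) = a" using g(2) ne by simp
  have t2: "last (take (Suc i) g) = g ! i" using i by (simp add: take_Suc_conv_app_nth)
  have t3: "length (take (Suc i) g) = Suc i" using i by simp
  have 1: "graph_dist E a (g ! i) \<le> i"
    using dist_le[OF walk_take[OF g(1), of "Suc i"] t1 t2] t3 by simp
  have 2: "graph_dist E (g ! i) b \<le> length g - 1 - i"
    using dist_le[of "drop i g" "g ! i" b] walk_drop[OF g(1) i] i g ne
    by (simp add: hd_drop_conv_nth)
  have 3: "graph_dist E a b \<le> graph_dist E a (g ! i) + graph_dist E (g ! i) b"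
    using dist_triangle a giV bV by blast
  show "graph_dist E a (g ! i) = i" using 1 2 3 g(4) i by linarith
  show "graph_dist E (g ! i) b = graph_dist E a b - i" using 1 2 3 g(4) i by linarith
  show "g ! i \<in> V" by fact
qed

lemma geo_distinct:
  assumes g: "walk E g" "hd g = a" "last g = b" "length g = graph_dist E a b + 1" and a: "a \<in> V"
  shows "distinct g"
  unfolding distinct_conv_nth
  using geo_prefix(1)[OF g a] by metis

lemma closer_nbr: assumes "a \<in> V" "b \<in> V" "a \<noteq> b"
  shows "\<exists>y. adj E a y \<and> graph_dist E y b + 1 = graph_dist E a b"
proof -
  obtain g where g: "walk E g" "hd g = a" "last g = b" "length g = graph_dist E a b + 1"
    using geo_exists assms by blast
  have "graph_dist E a b \<noteq> 0" using dist_zero assms by blast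
  then have l: "1 < length g" using g by simp
  have "adj E (g ! 0) (g ! 1)" using g(1) l unfolding walk_def by auto
  moreover have "g ! 0 = a" using g(2) l hd_conv_nth[of g] by fastforce
  moreover have "graph_dist E (g ! 1) b = graph_dist E a b - 1" using geo_prefix(2)[OF g assms(1) l] .
  ultimately show ?thesis using \<open>graph_dist E a b \<noteq> 0\<close> by (intro exI[of _ "g ! 1"]) auto
qed

end


lemma is_cycle_intro:
  assumes w: "walk E xs" and d: "distinct xs" and l: "length xs \<ge> 3" and a: "adj E (last xs) (hd xs)"
  shows "is_cycle E xs"
  unfolding is_cycle_def
proof (intro conjI allI impI)
  show "3 \<le> length xs" "distinct xs" by fact+
  fix i assume i: "i < length xs"
  show "adj E (xs ! i) (xs ! ((i + 1) mod length xs))"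
  proof (cases "i + 1 < length xs")
    case True then show ?thesis using w by (simp add: walk_def)
  next
    case False
    then have ii: "i = length xs - 1" using i by simp
    have ne: "xs \<noteq> []" using l by auto
    then have "(i + 1) mod length xs = 0" using ii by simp
    moreover have "last xs = xs ! i" using ne ii by (simp add: last_conv_nth)
    moreover have "hd xs = xs ! 0" using ne by (simp add: hd_conv_nth)
    ultimately show ?thesis using a by simp
  qed
qed

lemma meet_cycle:
  assumes w1: "walk E p1" and w2: "walk E p2" and d1: "distinct p1" and d2: "distinct p2"
    and l: "last p1 = last p2" and a: "adj E (hd p2) (hd p1)" and h: "hd p1 \<notin> set p2"
    and n1: "\<not> (1 < length p1 \<and> p1 ! 1 = hd p2)"
  shows "\<exists>cyc. set cyc \<subseteq> set p1 \<union> set p2 \<and> is_cycle E cyc"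
proof -
  have ne1: "p1 \<noteq> []" and ne2: "p2 \<noteq> []" using w1 w2 by (auto simp: walk_def)
  have ex: "\<exists>i. i < length p1 \<and> p1 ! i \<in> set p2"
    using ne1 ne2 l by (intro exI[of _ "length p1 - 1"]) (auto simp: last_conv_nth)
  define i where "i = (LEAST i. i < length p1 \<and> p1 ! i \<in> set p2)"
  have i: "i < length p1" "p1 ! i \<in> set p2" using LeastI_ex[OF ex] unfolding i_def by auto
  have imin: "p1 ! i' \<notin> set p2" if "i' < i" for i'
    using not_less_Least[of i' "\<lambda>i. i < length p1 \<and> p1 ! i \<in> set p2"] that i(1)
    unfolding i_def by auto
  obtain j where j: "j < length p2" "p2 ! j = p1 ! i" using i(2) by (auto simp: in_set_conv_nth)
  have i0: "i \<noteq> 0"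
  proof
    assume "i = 0"
    then have "hd p1 \<in> set p2" using i ne1 by (simp add: hd_conv_nth)
    then show False using h by simp
  qed
  define cyc where "cyc = take (Suc i) p1 @ rev (take j p2)"
  have "set cyc \<subseteq> set p1 \<union> set p2" unfolding cyc_def
    using set_take_subset[of "Suc i" p1] set_take_subset[of j p2] by auto
  moreover have "is_cycle E cyc"
  proof (rule is_cycle_intro)
    have dj: "set (take (Suc i) p1) \<inter> set (take j p2) = {}"
    proof (rule ccontr)
      assume "set (take (Suc i) p1) \<inter> set (take j p2) \<noteq> {}"
      then obtain x where x1: "x \<in> set (take (Suc i) p1)" and x2: "x \<in> set (take j p2)" by blast
      obtain i' where i': "i' < Suc i" "i' < length p1" "p1 ! i' = x" using x1 by (auto simp: in_set_conv_nth)
      obtain j' where j': "j' < j" "p2 ! j' = x" using x2 by (auto simp: in_set_conv_nth)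
      have "x \<in> set p2" using x2 set_take_subset by fastforce
      then have "i' = i" using imin i' by (metis less_SucE)
      then have "p2 ! j' = p2 ! j" using i' j' j by simp
      moreover have "j' < length p2" using j j' by simp
      ultimately show False using nth_eq_iff_index_eq[OF d2 _ j(1)] j' by auto
    qed
    show "distinct cyc" unfolding cyc_def using d1 d2 dj by (auto intro: distinct_take)
    show "3 \<le> length cyc"
    proof -
      have "\<not> (i = 1 \<and> j = 0)"
      proof
        assume "i = 1 \<and> j = 0"
        then have "p1 ! 1 = hd p2" using j ne2 by (simp add: hd_conv_nth)
        then show False using n1 i \<open>i = 1 \<and> j = 0\<close> by auto
      qed
      then show ?thesis unfolding cyc_def using i j i0 by auto
    qed
    have lt: "last (take (Suc i) p1) = p1 ! i" using i by (simp add: take_Suc_conv_app_nth)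
    show "walk E cyc"
    proof (cases "j = 0")
      case True then show ?thesis unfolding cyc_def using walk_take[OF w1] by simp
    next
      case False
      have "adj E (p2 ! (j - 1)) (p2 ! j)" using w2 j False unfolding walk_def
        by (metis Suc_diff_1 Suc_eq_plus1 bot_nat_0.not_eq_extremum)
      have "take j p2 = take (j - 1) p2 @ [p2 ! (j - 1)]" using j False
        by (metis Suc_diff_1 less_imp_diff_less not_gr_zero take_Suc_conv_app_nth)
      then have "last (take j p2) = p2 ! (j - 1)" by (metis last_snoc)
      then have "adj E (last (take (Suc i) p1)) (hd (rev (take j p2)))"
        using lt j \<open>adj E (p2 ! (j - 1)) (p2 ! j)\<close> by (simp add: hd_rev adj_sym)
      then show ?thesis unfolding cyc_def using False
        by (intro walk_append walk_take[OF w1] walk_rev walk_take[OF w2]) auto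
    qed
    have "last cyc = hd p2"
    proof (cases "j = 0")
      case True then show ?thesis unfolding cyc_def using lt j ne2 by (simp add: hd_conv_nth)
    next
      case False then show ?thesis unfolding cyc_def using ne2 by (simp add: last_rev hd_conv_nth)
    qed
    moreover have "hd cyc = hd p1" unfolding cyc_def using ne1 by simp
    ultimately show "adj E (last cyc) (hd cyc)" using a by simp
  qed
  ultimately show ?thesis by blast
qed

context sgraph begin

lemma nbrs_eq: "nbrs E x = {y \<in> V. adj E x y}" using adjD by (auto simp: nbrs_def)

lemma sum_nbrs_swap: "(\<Sum>x\<in>V. \<Sum>y\<in>nbrs E x. f x y) = (\<Sum>y\<in>V. \<Sum>x\<in>nbrs E y. f x y)"
proof -
  have "(\<Sum>x\<in>V. \<Sum>y\<in>nbrs E x. f x y) = (\<Sum>x\<in>V. \<Sum>y\<in>V. if adj E x y then f x y else 0)"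
    unfolding nbrs_eq using finV by (simp add: sum.inter_filter)
  also have "\<dots> = (\<Sum>y\<in>V. \<Sum>x\<in>V. if adj E x y then f x y else 0)" by (rule sum.swap)
  also have "\<dots> = (\<Sum>y\<in>V. \<Sum>x\<in>nbrs E y. f x y)"
    unfolding nbrs_eq using finV by (simp add: sum.inter_filter adj_sym)
  finally show ?thesis .
qed

lemma Vne: "V \<noteq> {}" using conn by (simp add: connected_graph_def)

end

locale tree = sgraph +
  assumes nocyc: "\<not> (\<exists>xs. set xs \<subseteq> V \<and> is_cycle E xs)"
begin

abbreviation dd where "dd \<equiv> graph_dist E"

lemma no_meet:
  assumes "walk E p1" "walk E p2" "distinct p1" "distinct p2" "last p1 = last p2"
    "adj E (hd p2) (hd p1)" "hd p1 \<notin> set p2" "\<not> (1 < length p1 \<and> p1 ! 1 = hd p2)"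
    "hd p1 \<in> V" "hd p2 \<in> V"
  shows False
proof -
  obtain cyc where c: "set cyc \<subseteq> set p1 \<union> set p2" "is_cycle E cyc" using meet_cycle assms by blast
  have "set p1 \<subseteq> V" "set p2 \<subseteq> V" using walk_hd_V assms by auto
  then show False using nocyc c by blast
qed

lemma dist_nbr_ne: assumes a: "adj E x y" and z: "z \<in> V" shows "dd x z \<noteq> dd y z"
proof
  assume eq: "dd x z = dd y z"
  have xV: "x \<in> V" and yV: "y \<in> V" and xy: "x \<noteq> y" using adjD a by auto
  obtain p1 where p1: "walk E p1" "hd p1 = x" "last p1 = z" "length p1 = dd x z + 1"
    using geo_exists xV z by blast
  obtain p2 where p2: "walk E p2" "hd p2 = y" "last p2 = z" "length p2 = dd y z + 1"
    using geo_exists yV z by blast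
  have yn: "y \<notin> set p1"
  proof
    assume "y \<in> set p1"
    then obtain i where i: "i < length p1" "p1 ! i = y" by (auto simp: in_set_conv_nth)
    have "dd y z = dd x z - i" using geo_prefix(2)[OF p1 xV i(1)] i by simp
    then have "i = 0" using eq i p1(4) by linarith
    then show False using i p1 xy by (metis hd_conv_nth list.size(3) not_less0)
  qed
  have xn: "x \<notin> set p2"
  proof
    assume "x \<in> set p2"
    then obtain i where i: "i < length p2" "p2 ! i = x" by (auto simp: in_set_conv_nth)
    have "dd x z = dd y z - i" using geo_prefix(2)[OF p2 yV i(1)] i by simp
    then have "i = 0" using eq i p2(4) by linarith
    then show False using i p2 xy by (metis hd_conv_nth list.size(3) not_less0)
  qed
  show False
  proof (rule no_meet[OF p1(1) p2(1) geo_distinct[OF p1 xV] geo_distinct[OF p2 yV]])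
    show "last p1 = last p2" using p1 p2 by simp
    show "adj E (hd p2) (hd p1)" using p1 p2 a by (simp add: adj_sym)
    show "hd p1 \<notin> set p2" using xn p1 by simp
    show "\<not> (1 < length p1 \<and> p1 ! 1 = hd p2)" using yn p2(2) by (metis nth_mem)
    show "hd p1 \<in> V" "hd p2 \<in> V" using p1 p2 xV yV by auto
  qed
qed

lemma dist_nbr: assumes a: "adj E x y" and z: "z \<in> V"
  shows "dd y z = dd x z + 1 \<or> dd x z = dd y z + 1"
proof -
  have xV: "x \<in> V" and yV: "y \<in> V" using adjD a by auto
  have "dd x z \<le> dd x y + dd y z" using dist_triangle xV yV z by blast
  moreover have "dd y z \<le> dd y x + dd x z" using dist_triangle xV yV z by blast
  moreover have "dd x y = 1" "dd y x = 1" using dist_adj a by (auto simp: adj_sym)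
  ultimately show ?thesis using dist_nbr_ne[OF a z] by linarith
qed

lemma closer_unique:
  assumes xV: "x \<in> V" and z: "z \<in> V" and a1: "adj E x y1" and a2: "adj E x y2"
    and d1: "dd y1 z + 1 = dd x z" and d2: "dd y2 z + 1 = dd x z"
  shows "y1 = y2"
proof (rule ccontr)
  assume ne: "y1 \<noteq> y2"
  have y1V: "y1 \<in> V" and y2V: "y2 \<in> V" using adjD a1 a2 by auto
  obtain q1 where q1: "walk E q1" "hd q1 = y1" "last q1 = z" "length q1 = dd y1 z + 1"
    using geo_exists y1V z by blast
  obtain q2 where q2: "walk E q2" "hd q2 = y2" "last q2 = z" "length q2 = dd y2 z + 1"
    using geo_exists y2V z by blast
  have xn1: "x \<notin> set q1"
  proof
    assume "x \<in> set q1"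
    then obtain i where i: "i < length q1" "q1 ! i = x" by (auto simp: in_set_conv_nth)
    have "dd x z = dd y1 z - i" using geo_prefix(2)[OF q1 y1V i(1)] i by simp
    then show False using d1 by linarith
  qed
  have xn2: "x \<notin> set q2"
  proof
    assume "x \<in> set q2"
    then obtain i where i: "i < length q2" "q2 ! i = x" by (auto simp: in_set_conv_nth)
    have "dd x z = dd y2 z - i" using geo_prefix(2)[OF q2 y2V i(1)] i by simp
    then show False using d2 by linarith
  qed
  have ne1: "q1 \<noteq> []" using q1 by auto
  show False
  proof (rule no_meet[of "x # q1" q2])
    show "walk E (x # q1)" using q1 a1 by (simp add: walk_Cons)
    show "walk E q2" by fact
    show "distinct (x # q1)" using xn1 geo_distinct[OF q1 y1V] by simp
    show "distinct q2" using geo_distinct[OF q2 y2V] .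
    show "last (x # q1) = last q2" using q1 q2 ne1 by simp
    show "adj E (hd q2) (hd (x # q1))" using q2 a2 by (simp add: adj_sym)
    show "hd (x # q1) \<notin> set q2" using xn2 by simp
    show "\<not> (1 < length (x # q1) \<and> (x # q1) ! 1 = hd q2)" using ne q1 q2 ne1 by (simp add: hd_conv_nth)
    show "hd (x # q1) \<in> V" "hd q2 \<in> V" using xV q2 y2V by auto
  qed
qed

lemma lap_dist:
  assumes xV: "x \<in> V" and z: "z \<in> V"
  shows "(\<Sum>y\<in>nbrs E x. real (dd y z)) =
     real (degree E x) * real (dd x z) + real (degree E x) - 2 + (if x = z then 2 else 0)"
proof (cases "x = z")
  case True
  have "(\<Sum>y\<in>nbrs E x. real (dd y z)) = (\<Sum>y\<in>nbrs E x. 1)"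
    using True by (intro sum.cong refl) (simp add: nbrs_def dist_adj adj_sym)
  then show ?thesis using True by (simp add: degree_nbrs)
next
  case False
  obtain y0 where y0: "adj E x y0" "dd y0 z + 1 = dd x z" using closer_nbr xV z False by blast
  have y0n: "y0 \<in> nbrs E x" using y0 by (simp add: nbrs_def)
  have far: "dd y z = dd x z + 1" if "y \<in> nbrs E x - {y0}" for y
  proof -
    have ay: "adj E x y" using that by (simp add: nbrs_def)
    have "y \<noteq> y0" using that by simp
    then have "\<not> (dd y z + 1 = dd x z)" using closer_unique[OF xV z ay y0(1)] y0(2) by auto
    then show ?thesis using dist_nbr[OF ay z] by auto
  qed
  have "(\<Sum>y\<in>nbrs E x. real (dd y z)) = real (dd y0 z) + (\<Sum>y\<in>nbrs E x - {y0}. real (dd y z))"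
    using y0n fin_nbrs by (simp add: sum.remove)
  also have "(\<Sum>y\<in>nbrs E x - {y0}. real (dd y z)) = (\<Sum>y\<in>nbrs E x - {y0}. real (dd x z) + 1)"
    using far by (intro sum.cong) auto
  also have "\<dots> = real (card (nbrs E x) - 1) * (real (dd x z) + 1)"
    using y0n fin_nbrs by simp
  finally have s: "(\<Sum>y\<in>nbrs E x. real (dd y z)) = real (dd y0 z) + real (card (nbrs E x) - 1) * (real (dd x z) + 1)" .
  have c: "card (nbrs E x) \<ge> 1" using y0n fin_nbrs card_0_eq by fastforce
  have "real (card (nbrs E x) - 1) = real (card (nbrs E x)) - 1" using c by simp
  moreover have "real (dd y0 z) = real (dd x z) - 1" using y0(2) by linarith
  ultimately show ?thesis using s False by (simp add: degree_nbrs algebra_simps)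
qed

lemma path_len: "walk E q \<Longrightarrow> distinct q \<Longrightarrow> hd q \<in> V \<Longrightarrow> length q = dd (hd q) (last q) + 1"
proof (induction q)
  case Nil then show ?case by (simp add: walk_def)
next
  case (Cons a q')
  show ?case
  proof (cases "q' = []")
    case True then show ?thesis by simp
  next
    case False
    have aa: "adj E a (hd q')" and wq: "walk E q'" using Cons.prems False by (auto simp: walk_Cons)
    have aV: "a \<in> V" using Cons.prems by simp
    have a'V: "hd q' \<in> V" using adjD aa by auto
    have dq: "distinct q'" and an: "a \<notin> set q'" using Cons.prems by auto
    define b where "b = last q'"
    have bV: "b \<in> V" using walk_hd_V[OF wq a'V] False unfolding b_def by auto
    have IH: "length q' = dd (hd q') b + 1" using Cons.IH wq dq a'V unfolding b_def by simp
    have lst: "last (a # q') = b" using False b_def by simp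
    have "dd a b = dd (hd q') b + 1"
    proof (rule ccontr)
      assume "dd a b \<noteq> dd (hd q') b + 1"
      then have f: "dd (hd q') b = dd a b + 1" using dist_nbr[OF aa bV] by auto
      then have l2: "1 < length q'" using IH by simp
      have g: "walk E q'" "hd q' = hd q'" "last q' = b" "length q' = dd (hd q') b + 1"
        using wq IH b_def by auto
      have "dd (q' ! 1) b = dd (hd q') b - 1" using geo_prefix(2)[OF g a'V l2] .
      then have c1: "dd (q' ! 1) b + 1 = dd (hd q') b" using f by simp
      have c2: "dd a b + 1 = dd (hd q') b" using f by simp
      have a1: "adj E (hd q') (q' ! 1)" using wq l2 False unfolding walk_def
        by (metis One_nat_def Suc_eq_plus1 hd_conv_nth zero_less_one)
      have "q' ! 1 = a" using closer_unique[OF a'V bV a1 _ c1 c2] aa by (simp add: adj_sym)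
      then show False using an l2 by (metis nth_mem)
    qed
    then show ?thesis using IH lst by simp
  qed
qed

lemma dist_parity: assumes u: "u \<in> V" and v: "v \<in> V"
  shows "x \<in> V \<Longrightarrow> even (dd x u + dd x v + dd u v)"
proof (induction "dd x u" arbitrary: x)
  case 0
  then have "x = u" using dist_zero u by metis
  then show ?case by simp
next
  case (Suc m)
  then have "x \<noteq> u" by auto
  then obtain y where y: "adj E x y" "dd y u + 1 = dd x u" using closer_nbr Suc.prems u by blast
  have yV: "y \<in> V" using adjD y by auto
  have "even (dd y u + dd y v + dd u v)" using Suc.hyps(1)[of y] y Suc.hyps(2) yV by simp
  moreover have "dd y v = dd x v + 1 \<or> dd x v = dd y v + 1" using dist_nbr[OF y(1) v] .
  then have "dd x u + dd x v + dd u v = dd y u + dd y v + dd u v \<or>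
     dd x u + dd x v + dd u v = (dd y u + dd y v + dd u v) + 2" using y(2) by auto
  ultimately show ?case by presburger
qed

lemma degree_sum: "(\<Sum>x\<in>V. real (degree E x)) = 2 * real (card V) - 2"
proof -
  obtain z where z: "z \<in> V" using Vne by blast
  have "(\<Sum>x\<in>V. \<Sum>y\<in>nbrs E x. real (dd y z)) = (\<Sum>y\<in>V. \<Sum>x\<in>nbrs E y. real (dd y z))"
    by (rule sum_nbrs_swap)
  also have "\<dots> = (\<Sum>y\<in>V. real (degree E y) * real (dd y z))" by (simp add: degree_nbrs)
  finally have e: "(\<Sum>x\<in>V. \<Sum>y\<in>nbrs E x. real (dd y z)) = (\<Sum>y\<in>V. real (degree E y) * real (dd y z))" .
  have "(\<Sum>x\<in>V. \<Sum>y\<in>nbrs E x. real (dd y z)) =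
     (\<Sum>x\<in>V. real (degree E x) * real (dd x z) + real (degree E x) - 2 + (if x = z then 2 else 0))"
    using lap_dist z by (intro sum.cong) auto
  also have "\<dots> = (\<Sum>x\<in>V. real (degree E x) * real (dd x z)) + (\<Sum>x\<in>V. real (degree E x)) - 2 * real (card V) + 2"
    using z finV by (simp add: sum.distrib sum_subtractf)
  finally show ?thesis using e by simp
qed

lemma closer_set: assumes kV: "k \<in> V" and xV: "x \<in> V" and ne: "k \<noteq> x"
  shows "\<exists>y0. {y \<in> nbrs E k. dd y x + 1 = dd k x} = {y0}"
proof -
  obtain y0 where y0: "adj E k y0" "dd y0 x + 1 = dd k x" using closer_nbr kV xV ne by blast
  have "{y \<in> nbrs E k. dd y x + 1 = dd k x} = {y0}"
    using y0 closer_unique[OF kV xV] by (auto simp: nbrs_def)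
  then show ?thesis by blast
qed

lemma sum_closer: assumes kV: "k \<in> V" and xV: "x \<in> V"
  shows "(\<Sum>y\<in>nbrs E k. if dd y x + 1 = dd k x then (c::real) else 0) = (if k = x then 0 else c)"
proof (cases "k = x")
  case True then show ?thesis by simp
next
  case False
  obtain y0 where y0: "{y \<in> nbrs E k. dd y x + 1 = dd k x} = {y0}" using closer_set kV xV False by blast
  have "(\<Sum>y\<in>nbrs E k. if dd y x + 1 = dd k x then c else 0) = (\<Sum>y\<in>{y \<in> nbrs E k. dd y x + 1 = dd k x}. c)"
    using sum.inter_filter[OF fin_nbrs[of k], of "\<lambda>_. c" "\<lambda>y. dd y x + 1 = dd k x"] by simp
  then show ?thesis using y0 False by simp
qed

lemma W_ident: assumes xV: "x \<in> V"
  shows "(\<Sum>k\<in>V. real (degree E k) * real (dd k x)) = 2 * (\<Sum>k\<in>V. real (dd k x)) - (real (card V) - 1)"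
proof -
  have split: "real (dd k x) = (if dd y x + 1 = dd k x then real (dd k x) else 0) +
      (if dd k x + 1 = dd y x then real (dd k x) else 0)" if "k \<in> V" "y \<in> nbrs E k" for k y
  proof -
    have "adj E k y" using that by (simp add: nbrs_def)
    then show ?thesis using dist_nbr[of k y x] xV by auto
  qed
  have "(\<Sum>k\<in>V. real (degree E k) * real (dd k x)) = (\<Sum>k\<in>V. \<Sum>y\<in>nbrs E k. real (dd k x))"
    by (simp add: degree_nbrs)
  also have "\<dots> = (\<Sum>k\<in>V. \<Sum>y\<in>nbrs E k. (if dd y x + 1 = dd k x then real (dd k x) else 0)) +
      (\<Sum>k\<in>V. \<Sum>y\<in>nbrs E k. (if dd k x + 1 = dd y x then real (dd k x) else 0))"
    by (subst sum.distrib[symmetric], intro sum.cong refl, subst sum.distrib[symmetric],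
        intro sum.cong refl split) auto
  also have "(\<Sum>k\<in>V. \<Sum>y\<in>nbrs E k. (if dd y x + 1 = dd k x then real (dd k x) else 0)) = (\<Sum>k\<in>V. real (dd k x))"
    using sum_closer xV by (intro sum.cong refl) auto
  also have "(\<Sum>k\<in>V. \<Sum>y\<in>nbrs E k. (if dd k x + 1 = dd y x then real (dd k x) else 0))
      = (\<Sum>y\<in>V. \<Sum>k\<in>nbrs E y. (if dd k x + 1 = dd y x then real (dd y x) - 1 else 0))"
    by (subst sum_nbrs_swap) (intro sum.cong refl, auto)
  also have "\<dots> = (\<Sum>y\<in>V. if y = x then 0 else real (dd y x) - 1)"
    using sum_closer xV by (intro sum.cong refl) auto
  also have "\<dots> = (\<Sum>y\<in>V. real (dd y x) - 1) + 1"
  proof -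
    have "(\<Sum>y\<in>V. real (dd y x) - 1) = (\<Sum>y\<in>V. if y = x then 0 else real (dd y x) - 1) + (real (dd x x) - 1)"
      using xV finV by (simp add: sum.remove[of V x] sum.delta_remove)
    then show ?thesis by simp
  qed
  finally show ?thesis using finV by (simp add: sum_subtractf)
qed

end


primrec surv :: "'a set \<Rightarrow> 'a set set \<Rightarrow> 'a \<Rightarrow> nat \<Rightarrow> 'a \<Rightarrow> real" where
  "surv V E k 0 j = 1"
| "surv V E k (Suc t) j = (\<Sum>l\<in>V - {k}. trans_mat E j l * surv V E k t l)"

primrec remn :: "'a set \<Rightarrow> 'a set set \<Rightarrow> 'a \<Rightarrow> ('a \<Rightarrow> real) \<Rightarrow> nat \<Rightarrow> 'a \<Rightarrow> real" where
  "remn V E k h 0 j = h j"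
| "remn V E k h (Suc t) j = (\<Sum>l\<in>V - {k}. trans_mat E j l * remn V E k h t l)"

lemma trans_nonneg: "trans_mat E x l \<ge> 0" by (simp add: trans_mat_def adj_mat_def)

context sgraph begin

lemma deg_pos: assumes c2: "2 \<le> card V" and xV: "x \<in> V" shows "0 < degree E x"
proof -
  obtain y where y: "y \<in> V" "y \<noteq> x"
  proof (rule ccontr)
    assume "\<not> thesis"
    then have "V \<subseteq> {x}" using that by blast
    then have "card V \<le> 1" using card_mono[of "{x}" V] by simp
    then show False using c2 by simp
  qed
  obtain xs where xs: "walk E xs" "hd xs = x" "last xs = y" using walk_exists xV y by blast
  have ne: "xs \<noteq> []" using xs by (simp add: walk_def)
  have l2: "1 < length xs"
  proof (rule ccontr)
    assume "\<not> 1 < length xs"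
    then have "length xs = 1" using ne by (cases xs) auto
    then have "hd xs = last xs" by (cases xs) auto
    then show False using xs y by simp
  qed
  have "adj E (xs ! 0) (xs ! 1)" using xs(1) l2 unfolding walk_def by auto
  then have "xs ! 1 \<in> nbrs E x" using xs(2) ne by (simp add: nbrs_def hd_conv_nth)
  then show ?thesis unfolding degree_nbrs using fin_nbrs card_gt_0_iff by blast
qed

lemma sum_trans: assumes "x \<in> V"
  shows "(\<Sum>l\<in>V. trans_mat E x l * f l) = (\<Sum>l\<in>nbrs E x. f l) / real (degree E x)"
proof -
  have "(\<Sum>l\<in>V. trans_mat E x l * f l) = (\<Sum>l\<in>V. (if adj E x l then f l else 0)) / real (degree E x)"
    unfolding sum_divide_distrib by (intro sum.cong) (auto simp: trans_mat_def adj_mat_def)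
  also have "(\<Sum>l\<in>V. (if adj E x l then f l else 0)) = (\<Sum>l\<in>nbrs E x. f l)"
    unfolding nbrs_eq using finV by (simp add: sum.inter_filter)
  finally show ?thesis .
qed

end

locale mgraph = sgraph +
  assumes degpos: "\<And>x. x \<in> V \<Longrightarrow> 0 < degree E x"
begin

lemma row1: "x \<in> V \<Longrightarrow> (\<Sum>l\<in>V. trans_mat E x l) = 1"
  using sum_trans[of x "\<lambda>_. 1"] degpos[of x] by (simp add: degree_nbrs)

lemma row_sub: "x \<in> V \<Longrightarrow> k \<in> V \<Longrightarrow> (\<Sum>l\<in>V - {k}. trans_mat E x l) = 1 - trans_mat E x k"
  using row1[of x] finV by (simp add: sum_diff1)

lemma row_sub_le: "x \<in> V \<Longrightarrow> k \<in> V \<Longrightarrow> (\<Sum>l\<in>V - {k}. trans_mat E x l) \<le> 1"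
  using row_sub[of x k] trans_nonneg[of E x k] by simp

lemma min_principle:
  assumes kV: "k \<in> V" and hk: "h k = 0"
    and sys: "\<And>j. j \<in> V - {k} \<Longrightarrow> h j = 1 + (\<Sum>l\<in>V - {k}. trans_mat E j l * h l)"
  shows "\<And>j. j \<in> V \<Longrightarrow> 0 \<le> h j"
proof -
  define m where "m = Min (h ` V)"
  have fin: "finite (h ` V)" "h ` V \<noteq> {}" using finV kV by auto
  have mle: "m \<le> h l" if "l \<in> V" for l using Min_le[OF fin(1)] that unfolding m_def by auto
  obtain j0 where j0: "j0 \<in> V" "h j0 = m" using Min_in[OF fin] unfolding m_def by auto
  have "0 \<le> m"
  proof (rule ccontr)
    assume neg: "\<not> 0 \<le> m"
    have "j0 \<noteq> k" using hk j0 neg by auto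
    then have "h j0 = 1 + (\<Sum>l\<in>V - {k}. trans_mat E j0 l * h l)" using sys j0 by auto
    also have "(\<Sum>l\<in>V - {k}. trans_mat E j0 l * h l) \<ge> (\<Sum>l\<in>V - {k}. trans_mat E j0 l * m)"
      using mle trans_nonneg by (intro sum_mono mult_left_mono) auto
    moreover have "(\<Sum>l\<in>V - {k}. trans_mat E j0 l * m) = m * (\<Sum>l\<in>V - {k}. trans_mat E j0 l)"
      by (simp add: sum_distrib_left mult.commute)
    moreover have "m * (\<Sum>l\<in>V - {k}. trans_mat E j0 l) \<ge> m"
    proof -
      have "(\<Sum>l\<in>V - {k}. trans_mat E j0 l) \<le> 1" using row_sub_le j0 kV by simp
      then show ?thesis using neg by (simp add: mult_le_cancel_left1)
    qed
    ultimately have "h j0 \<ge> 1 + m" by linarith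
    then show False using j0 by simp
  qed
  then show "\<And>j. j \<in> V \<Longrightarrow> 0 \<le> h j" using mle by fastforce
qed

lemma surv_nonneg: "0 \<le> surv V E k t j"
  by (induction t arbitrary: j) (auto intro!: sum_nonneg mult_nonneg_nonneg trans_nonneg)

lemma fp_surv: assumes kV: "k \<in> V"
  shows "j \<in> V \<Longrightarrow> first_passage V E (Suc t) j k = surv V E k t j - surv V E k (Suc t) j"
proof (induction t arbitrary: j)
  case 0
  then show ?case using row_sub[OF 0 kV] by simp
next
  case (Suc t)
  have "first_passage V E (Suc (Suc t)) j k = (\<Sum>l\<in>V - {k}. trans_mat E j l * first_passage V E (Suc t) l k)"
    by simp
  also have "\<dots> = (\<Sum>l\<in>V - {k}. trans_mat E j l * (surv V E k t l - surv V E k (Suc t) l))"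
    using Suc.IH by (intro sum.cong) auto
  also have "\<dots> = surv V E k (Suc t) j - surv V E k (Suc (Suc t)) j"
    by (simp add: right_diff_distrib sum_subtractf)
  finally show ?case .
qed

lemma surv_le: assumes kV: "k \<in> V" shows "j \<in> V \<Longrightarrow> surv V E k (Suc t) j \<le> surv V E k t j"
proof (induction t arbitrary: j)
  case 0 then show ?case using row_sub_le[OF 0 kV] by simp
next
  case (Suc t)
  show ?case using Suc.IH trans_nonneg by (simp, intro sum_mono mult_left_mono) auto
qed

lemma fp_nonneg: assumes "k \<in> V" "j \<in> V" shows "0 \<le> first_passage V E t j k"
proof (cases t)
  case 0 then show ?thesis by simp
next
  case (Suc t') then show ?thesis using fp_surv[OF assms(1) assms(2)] surv_le[OF assms] by simp
qed

lemma hitting: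
  assumes kV: "k \<in> V" and hk: "h k = 0"
    and sys: "\<And>j. j \<in> V - {k} \<Longrightarrow> h j = 1 + (\<Sum>l\<in>V - {k}. trans_mat E j l * h l)"
    and jV: "j \<in> V - {k}"
  shows "mfpt V E j k = h j"
proof -
  have hpos: "\<And>j. j \<in> V \<Longrightarrow> 0 \<le> h j" using min_principle[OF kV hk sys] by blast
  let ?s = "surv V E k" and ?r = "remn V E k h"
  have rdiff: "?r t i - ?r (Suc t) i = ?s t i" if "i \<in> V - {k}" for t i
    using that
  proof (induction t arbitrary: i)
    case 0 then show ?case using sys[OF 0] by simp
  next
    case (Suc t)
    have "?r (Suc t) i - ?r (Suc (Suc t)) i = (\<Sum>l\<in>V - {k}. trans_mat E i l * (?r t l - ?r (Suc t) l))"
      by (simp add: right_diff_distrib sum_subtractf)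
    also have "\<dots> = (\<Sum>l\<in>V - {k}. trans_mat E i l * ?s t l)" using Suc.IH by (intro sum.cong) auto
    finally show ?case by simp
  qed
  have tele: "h i = (\<Sum>t'<t. ?s t' i) + ?r t i" if "i \<in> V - {k}" for t i
  proof (induction t)
    case 0 then show ?case by simp
  next
    case (Suc t) then show ?case using rdiff[OF that, of t] by simp
  qed
  define Hm where "Hm = Max (h ` V)"
  have Hm: "h i \<le> Hm" if "i \<in> V" for i unfolding Hm_def using finV that by (intro Max_ge) auto
  have rb: "0 \<le> ?r t i \<and> ?r t i \<le> Hm * ?s t i" if "i \<in> V" for t i
    using that
  proof (induction t arbitrary: i)
    case 0 then show ?case using hpos Hm by simp
  next
    case (Suc t)
    have "0 \<le> ?r (Suc t) i" using Suc.IH trans_nonneg by (simp, intro sum_nonneg mult_nonneg_nonneg) auto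
    moreover have "?r (Suc t) i \<le> (\<Sum>l\<in>V - {k}. trans_mat E i l * (Hm * ?s t l))"
      using Suc.IH trans_nonneg by (simp, intro sum_mono mult_left_mono) auto
    moreover have "(\<Sum>l\<in>V - {k}. trans_mat E i l * (Hm * ?s t l)) = Hm * ?s (Suc t) i"
      by (simp add: sum_distrib_left algebra_simps)
    ultimately show ?case by simp
  qed
  have jV': "j \<in> V" using jV by simp
  have smono: "?s t' j \<ge> ?s t j" if "t' \<le> t" for t t'
    using lift_Suc_antimono_le[of "\<lambda>t. ?s t j", OF surv_le[OF kV jV'] that] .
  have tb: "real t * ?s t j \<le> h j" for t
  proof -
    have "real t * ?s t j = (\<Sum>t'<t. ?s t j)" by simp
    also have "\<dots> \<le> (\<Sum>t'<t. ?s t' j)" using smono by (intro sum_mono) auto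
    also have "\<dots> \<le> h j" using tele[OF jV, of t] rb[OF jV'] by simp
    finally show ?thesis .
  qed
  have s0: "(\<lambda>t. ?s t j) \<longlonglongrightarrow> 0"
  proof (rule tendsto_sandwich[of "\<lambda>_. 0" _ _ "\<lambda>t. h j / real t"])
    show "\<forall>\<^sub>F t in sequentially. 0 \<le> ?s t j" using surv_nonneg by simp
    show "\<forall>\<^sub>F t in sequentially. ?s t j \<le> h j / real t"
      using eventually_gt_at_top[of 0]
    proof eventually_elim
      case (elim t) then show ?case using tb[of t] by (simp add: field_simps)
    qed
    show "(\<lambda>_. 0) \<longlonglongrightarrow> (0::real)" by simp
    show "(\<lambda>t. h j / real t) \<longlonglongrightarrow> 0" by (rule lim_const_over_n)
  qed
  define a where "a t = real t * first_passage V E t j k" for t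
  have anonneg: "0 \<le> a t" for t unfolding a_def using fp_nonneg[OF kV jV'] by simp
  have psum: "(\<Sum>t<Suc N. a t) = (\<Sum>t'<N. ?s t' j) - real N * ?s N j" for N
  proof (induction N)
    case 0 then show ?case by (simp add: a_def)
  next
    case (Suc N)
    have "(\<Sum>t<Suc (Suc N). a t) = (\<Sum>t<Suc N. a t) + a (Suc N)" by simp
    also have "a (Suc N) = real (Suc N) * (?s N j - ?s (Suc N) j)"
      unfolding a_def using fp_surv[OF kV jV'] by simp
    finally show ?case using Suc.IH by (simp add: algebra_simps)
  qed
  have psum2: "(\<Sum>t<Suc N. a t) = h j - ?r N j - real N * ?s N j" for N
    using psum[of N] tele[OF jV, of N] by simp
  have summ: "summable a"
  proof (rule bounded_imp_summable[of a "h j"])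
    show "0 \<le> a n" for n by (rule anonneg)
    show "(\<Sum>k\<le>n. a k) \<le> h j" for n
    proof -
      have "(\<Sum>k\<le>n. a k) = (\<Sum>k<Suc n. a k)" by (simp add: lessThan_Suc_atMost)
      also have "\<dots> = h j - ?r n j - real n * ?s n j" by (rule psum2)
      also have "\<dots> \<le> h j" using rb[OF jV', of n] mult_nonneg_nonneg[OF of_nat_0_le_iff[of n] surv_nonneg[of k n j]] by linarith
      finally show ?thesis .
    qed
  qed
  have tail: "real N * ?s N j \<le> suminf a - (\<Sum>t<Suc N. a t)" for N
  proof -
    have tel: "(\<lambda>i. ?s (i + N) j - ?s (Suc (i + N)) j) sums (?s (0 + N) j - 0)"
      using telescope_sums'[of "\<lambda>i. ?s (i + N) j" 0] LIMSEQ_ignore_initial_segment[OF s0, of N]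
      by simp
    have tel2: "(\<lambda>i. real N * (?s (i + N) j - ?s (Suc (i + N)) j)) sums (real N * ?s N j)"
      using sums_mult[OF tel, of "real N"] by simp
    have sa: "summable (\<lambda>i. a (i + Suc N))" using summable_ignore_initial_segment[OF summ] .
    have "real N * ?s N j = (\<Sum>i. real N * (?s (i + N) j - ?s (Suc (i + N)) j))"
      using tel2 by (simp add: sums_iff)
    also have "\<dots> \<le> (\<Sum>i. a (i + Suc N))"
    proof (rule suminf_le)
      show "summable (\<lambda>i. real N * (?s (i + N) j - ?s (Suc (i + N)) j))" using tel2 by (simp add: sums_iff)
      show "summable (\<lambda>i. a (i + Suc N))" by (rule sa)
      fix i
      have fp: "first_passage V E (Suc (i + N)) j k = ?s (i + N) j - ?s (Suc (i + N)) j"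
        by (rule fp_surv[OF kV jV'])
      have "0 \<le> ?s (i + N) j - ?s (Suc (i + N)) j" using surv_le[OF kV jV'] by simp
      then show "real N * (?s (i + N) j - ?s (Suc (i + N)) j) \<le> a (i + Suc N)"
        unfolding a_def using fp by (simp add: mult_right_mono)
    qed
    also have "\<dots> = suminf a - (\<Sum>t<Suc N. a t)" using suminf_split_initial_segment[OF summ, of "Suc N"] by simp
    finally show ?thesis .
  qed
  have lim_a: "(\<lambda>N. \<Sum>t<Suc N. a t) \<longlonglongrightarrow> suminf a" using LIMSEQ_Suc[OF summable_LIMSEQ[OF summ]] .
  have ns0: "(\<lambda>N. real N * ?s N j) \<longlonglongrightarrow> 0"
  proof (rule tendsto_sandwich[of "\<lambda>_. 0" _ _ "\<lambda>N. suminf a - (\<Sum>t<Suc N. a t)"])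
    show "\<forall>\<^sub>F N in sequentially. 0 \<le> real N * ?s N j" using surv_nonneg by simp
    show "\<forall>\<^sub>F N in sequentially. real N * ?s N j \<le> suminf a - (\<Sum>t<Suc N. a t)" using tail by simp
    show "(\<lambda>_. 0) \<longlonglongrightarrow> (0::real)" by simp
    show "(\<lambda>N. suminf a - (\<Sum>t<Suc N. a t)) \<longlonglongrightarrow> 0"
      using tendsto_diff[OF tendsto_const[of "suminf a"] lim_a] by simp
  qed
  have r0: "(\<lambda>N. ?r N j) \<longlonglongrightarrow> 0"
  proof (rule tendsto_sandwich[of "\<lambda>_. 0" _ _ "\<lambda>N. Hm * ?s N j"])
    show "\<forall>\<^sub>F N in sequentially. 0 \<le> ?r N j" using rb[OF jV'] by simp
    show "\<forall>\<^sub>F N in sequentially. ?r N j \<le> Hm * ?s N j" using rb[OF jV'] by simp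
    show "(\<lambda>_. 0) \<longlonglongrightarrow> (0::real)" by simp
    show "(\<lambda>N. Hm * ?s N j) \<longlonglongrightarrow> 0" using tendsto_mult[OF tendsto_const[of Hm] s0] by simp
  qed
  have "(\<lambda>N. \<Sum>t<Suc N. a t) \<longlonglongrightarrow> h j - 0 - 0"
    unfolding psum2 by (intro tendsto_diff tendsto_const r0 ns0)
  then have "(\<lambda>N. \<Sum>t<N. a t) \<longlonglongrightarrow> h j" using LIMSEQ_imp_Suc[of "\<lambda>N. \<Sum>t<N. a t"] by simp
  then have "a sums h j" by (simp add: sums_def)
  then show ?thesis unfolding mfpt_def a_def[symmetric] by (simp add: sums_iff)
qed

end


lemma walk_prop: "walk E xs \<Longrightarrow> hd xs \<in> S \<Longrightarrow> (\<And>a b. a \<in> S \<Longrightarrow> adj E a b \<Longrightarrow> b \<in> S) \<Longrightarrow> last xs \<in> S"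
proof (induction xs)
  case Nil then show ?case by (simp add: walk_def)
next
  case (Cons x xs)
  show ?case
  proof (cases "xs = []")
    case True then show ?thesis using Cons by simp
  next
    case False
    then have "adj E x (hd xs)" "walk E xs" using Cons.prems by (auto simp: walk_Cons)
    then have "hd xs \<in> S" using Cons.prems by auto
    then show ?thesis using Cons.IH \<open>walk E xs\<close> Cons.prems(3) False by simp
  qed
qed

context mgraph begin

definition Sd where "Sd = (\<Sum>x\<in>V. real (degree E x))"

lemma Sd_pos: "0 < Sd"
proof -
  obtain x where "x \<in> V" using Vne by blast
  then have "0 < real (degree E x)" using degpos by simp
  moreover have "real (degree E x) \<le> Sd" unfolding Sd_def using \<open>x \<in> V\<close> finV
    by (intro member_le_sum) auto
  ultimately show ?thesis by simp
qed

lemma sum_adj_col: "k \<in> V \<Longrightarrow> (\<Sum>j\<in>V. adj_mat E j k * f j) = (\<Sum>j\<in>nbrs E k. f j)"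
proof -
  assume "k \<in> V"
  have "(\<Sum>j\<in>V. adj_mat E j k * f j) = (\<Sum>j\<in>V. if adj E k j then f j else 0)"
    by (intro sum.cong) (auto simp: adj_mat_def adj_sym)
  also have "\<dots> = (\<Sum>j\<in>nbrs E k. f j)" unfolding nbrs_eq using finV by (simp add: sum.inter_filter)
  finally show ?thesis .
qed

lemma stationary_eq: "stationary V E = (\<lambda>k. if k \<in> V then real (degree E k) / Sd else 0)"
  unfolding stationary_def
proof (rule the_equality)
  let ?w = "\<lambda>k. if k \<in> V then real (degree E k) / Sd else 0"
  show "(\<forall>k\<in>V. 0 \<le> ?w k) \<and> (\<forall>k. k \<notin> V \<longrightarrow> ?w k = 0) \<and> sum ?w V = 1 \<and>
      (\<forall>k\<in>V. (\<Sum>j\<in>V. ?w j * trans_mat E j k) = ?w k)"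
  proof (intro conjI ballI allI impI)
    show "0 \<le> ?w k" if "k \<in> V" for k using Sd_pos by simp
    show "?w k = 0" if "k \<notin> V" for k using that by simp
    show "sum ?w V = 1" using Sd_pos unfolding Sd_def by (simp add: sum_divide_distrib[symmetric])
    fix k assume kV: "k \<in> V"
    have "(\<Sum>j\<in>V. ?w j * trans_mat E j k) = (\<Sum>j\<in>V. adj_mat E j k * (1 / Sd))"
      using degpos by (intro sum.cong) (auto simp: trans_mat_def)
    also have "\<dots> = (\<Sum>j\<in>nbrs E k. 1 / Sd)" using sum_adj_col[OF kV, of "\<lambda>_. 1 / Sd"] by simp
    also have "\<dots> = ?w k" using kV by (simp add: degree_nbrs)
    finally show "(\<Sum>j\<in>V. ?w j * trans_mat E j k) = ?w k" .
  qed
  fix w assume H: "(\<forall>k\<in>V. 0 \<le> w k) \<and> (\<forall>k. k \<notin> V \<longrightarrow> w k = 0) \<and> sum w V = 1 \<and>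
      (\<forall>k\<in>V. (\<Sum>j\<in>V. w j * trans_mat E j k) = w k)"
  define x where "x j = w j / real (degree E j)" for j
  have wx: "w j = real (degree E j) * x j" if "j \<in> V" for j
    using degpos[OF that] unfolding x_def by simp
  have harm: "(\<Sum>j\<in>nbrs E k. x j) = real (degree E k) * x k" if kV: "k \<in> V" for k
  proof -
    have "(\<Sum>j\<in>nbrs E k. x j) = (\<Sum>j\<in>V. adj_mat E j k * x j)" using sum_adj_col kV by simp
    also have "\<dots> = (\<Sum>j\<in>V. w j * trans_mat E j k)"
      by (intro sum.cong) (auto simp: x_def trans_mat_def)
    also have "\<dots> = w k" using H kV by blast
    finally show ?thesis using wx kV by simp
  qed
  define M where "M = Max (x ` V)"
  have fin: "finite (x ` V)" "x ` V \<noteq> {}" using finV Vne by auto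
  have xle: "x j \<le> M" if "j \<in> V" for j using Max_ge[OF fin(1)] that unfolding M_def by auto
  obtain j0 where j0: "j0 \<in> V" "x j0 = M" using Max_in[OF fin] unfolding M_def by auto
  have step: "b \<in> {j \<in> V. x j = M}" if a: "a \<in> {j \<in> V. x j = M}" and ab: "adj E a b" for a b
  proof -
    have aV: "a \<in> V" and xa: "x a = M" using a by auto
    have "(\<Sum>j\<in>nbrs E a. M - x j) = real (degree E a) * M - (\<Sum>j\<in>nbrs E a. x j)"
      by (simp add: sum_subtractf degree_nbrs)
    also have "\<dots> = 0" using harm[OF aV] xa by simp
    finally have z: "(\<Sum>j\<in>nbrs E a. M - x j) = 0" .
    have "\<forall>j\<in>nbrs E a. M - x j = 0"
      using sum_nonneg_eq_0_iff[OF fin_nbrs[of a], where f="\<lambda>j. M - x j"] z xle nbrs_sub by auto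
    moreover have "b \<in> nbrs E a" using ab by (simp add: nbrs_def)
    ultimately show ?thesis using adjD ab by auto
  qed
  have allM: "x v = M" if vV: "v \<in> V" for v
  proof -
    obtain xs where xs: "walk E xs" "hd xs = j0" "last xs = v" using walk_exists j0 vV by blast
    have "last xs \<in> {j \<in> V. x j = M}" using walk_prop[OF xs(1), of "{j \<in> V. x j = M}"] step xs j0 by blast
    then show ?thesis using xs by simp
  qed
  have "1 = (\<Sum>j\<in>V. w j)" using H by simp
  also have "\<dots> = (\<Sum>j\<in>V. real (degree E j) * M)" using wx allM by (intro sum.cong) auto
  also have "\<dots> = Sd * M" unfolding Sd_def by (simp add: sum_distrib_right)
  finally have MS: "M = 1 / Sd" using Sd_pos by (simp add: field_simps)
  show "w = ?w"
  proof
    fix k show "w k = ?w k"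
      using H wx allM MS by (cases "k \<in> V") auto
  qed
qed

lemma kemeny_formula:
  fixes R :: "'a \<Rightarrow> 'a \<Rightarrow> real" and \<alpha> :: "'a \<Rightarrow> real"
  assumes Rsym: "\<And>x y. x \<in> V \<Longrightarrow> y \<in> V \<Longrightarrow> R x y = R y x"
    and Rdiag: "\<And>x. x \<in> V \<Longrightarrow> R x x = 0"
    and lap: "\<And>j l. j \<in> V \<Longrightarrow> l \<in> V \<Longrightarrow>
        (\<Sum>i\<in>nbrs E j. R i l) = real (degree E j) * R j l - \<alpha> j + (if j = l then 2 else 0)"
  shows "kemeny V E = (\<Sum>k\<in>V. \<Sum>l\<in>V. real (degree E k) * real (degree E l) * R k l) / (2 * Sd)"
proof -
  let ?d = "\<lambda>x. real (degree E x)"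
  define j0 where "j0 = (SOME j. j \<in> V)"
  have j0V: "j0 \<in> V" unfolding j0_def using Vne by (simp add: some_in_eq)
  define hk where "hk k j = (1/2) * (\<Sum>l\<in>V. ?d l * (R j k + R k l - R j l))" for k j
  have hkk: "hk k k = 0" if "k \<in> V" for k unfolding hk_def using Rdiag[OF that] by simp
  have sys: "hk k j = 1 + (\<Sum>l\<in>V - {k}. trans_mat E j l * hk k l)" if kV: "k \<in> V" and jV: "j \<in> V - {k}" for k j
  proof -
    have jV': "j \<in> V" and jk: "j \<noteq> k" using jV by auto
    have "(\<Sum>l\<in>V - {k}. trans_mat E j l * hk k l) = (\<Sum>l\<in>V. trans_mat E j l * hk k l)"
      using hkk[OF kV] kV finV by (simp add: sum_diff1)
    also have "\<dots> = (\<Sum>i\<in>nbrs E j. hk k i) / ?d j" by (rule sum_trans[OF jV'])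
    also have "(\<Sum>i\<in>nbrs E j. hk k i) =
        (1/2) * (\<Sum>l\<in>V. ?d l * ((\<Sum>i\<in>nbrs E j. R i k) + ?d j * R k l - (\<Sum>i\<in>nbrs E j. R i l)))"
    proof -
      have "(\<Sum>i\<in>nbrs E j. hk k i) = (1/2) * (\<Sum>i\<in>nbrs E j. \<Sum>l\<in>V. ?d l * (R i k + R k l - R i l))"
        unfolding hk_def by (simp add: sum_distrib_left)
      also have "(\<Sum>i\<in>nbrs E j. \<Sum>l\<in>V. ?d l * (R i k + R k l - R i l)) =
          (\<Sum>l\<in>V. \<Sum>i\<in>nbrs E j. ?d l * (R i k + R k l - R i l))" by (rule sum.swap)
      also have "\<dots> = (\<Sum>l\<in>V. ?d l * ((\<Sum>i\<in>nbrs E j. R i k) + ?d j * R k l - (\<Sum>i\<in>nbrs E j. R i l)))"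
        by (intro sum.cong refl) (simp add: sum_distrib_left[symmetric] sum.distrib sum_subtractf degree_nbrs)
      finally show ?thesis .
    qed
    also have "\<dots> = (1/2) * (\<Sum>l\<in>V. ?d l * (?d j * (R j k + R k l - R j l)) - ?d l * (if j = l then 2 else 0))"
    proof -
      have e: "(\<Sum>i\<in>nbrs E j. R i k) + ?d j * R k l - (\<Sum>i\<in>nbrs E j. R i l) =
          ?d j * (R j k + R k l - R j l) - (if j = l then 2 else 0)" if "l \<in> V" for l
        using lap[OF jV' kV] lap[OF jV' that] jk by (cases "j = l") (simp_all add: algebra_simps)
      show ?thesis using e by (intro arg_cong[where f="\<lambda>x. (1/2) * x"] sum.cong refl) (simp add: right_diff_distrib)
    qed
    also have "\<dots> = ?d j * hk k j - ?d j"
    proof -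
      have "(\<Sum>l\<in>V. ?d l * (if j = l then 2 else 0)) = 2 * ?d j" using jV' finV
        by (simp add: if_distrib[of "\<lambda>x. ?d _ * x"] sum.delta cong: if_cong)
      have "(\<Sum>l\<in>V. ?d l * (?d j * (R j k + R k l - R j l)) - ?d l * (if j = l then 2 else 0)) =
          (\<Sum>l\<in>V. ?d j * (?d l * (R j k + R k l - R j l))) - (\<Sum>l\<in>V. ?d l * (if j = l then 2 else 0))"
        by (simp add: sum_subtractf mult.left_commute)
      also have "\<dots> = ?d j * (\<Sum>l\<in>V. ?d l * (R j k + R k l - R j l)) - 2 * ?d j"
        using \<open>(\<Sum>l\<in>V. ?d l * (if j = l then 2 else 0)) = 2 * ?d j\<close> by (simp add: sum_distrib_left)
      finally show ?thesis unfolding hk_def by (simp add: algebra_simps)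
    qed
    finally have "(\<Sum>l\<in>V - {k}. trans_mat E j l * hk k l) = (?d j * hk k j - ?d j) / ?d j" .
    moreover have "(?d j * hk k j - ?d j) / ?d j = hk k j - 1" using degpos[OF jV'] by (simp add: field_simps)
    ultimately show ?thesis by simp
  qed
  have mf: "mfpt V E j0 k = hk k j0" if "k \<in> V - {j0}" for k
    using hitting[of k "hk k" j0] that hkk sys j0V by auto
  have "kemeny V E = (\<Sum>k\<in>V - {j0}. mfpt V E j0 k * stationary V E k)"
    unfolding kemeny_def j0_def Let_def by simp
  also have "\<dots> = (\<Sum>k\<in>V - {j0}. hk k j0 * (?d k / Sd))"
    using mf by (intro sum.cong) (auto simp: stationary_eq)
  also have "\<dots> = (\<Sum>k\<in>V. hk k j0 * (?d k / Sd))"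
    using hkk[OF j0V] j0V finV by (simp add: sum_diff1)
  also have "\<dots> = (\<Sum>k\<in>V. ?d k * hk k j0) / Sd" by (simp add: sum_divide_distrib mult.commute)
  also have "(\<Sum>k\<in>V. ?d k * hk k j0) = (\<Sum>k\<in>V. \<Sum>l\<in>V. ?d k * ?d l * R k l) / 2"
  proof -
    have "(\<Sum>k\<in>V. ?d k * hk k j0) = (1/2) * (\<Sum>k\<in>V. \<Sum>l\<in>V. ?d k * ?d l * R j0 k + ?d k * ?d l * R k l - ?d k * ?d l * R j0 l)"
      unfolding hk_def by (simp add: sum_distrib_left algebra_simps)
    also have "(\<Sum>k\<in>V. \<Sum>l\<in>V. ?d k * ?d l * R j0 k + ?d k * ?d l * R k l - ?d k * ?d l * R j0 l)
       = (\<Sum>k\<in>V. \<Sum>l\<in>V. ?d k * ?d l * R j0 k) + (\<Sum>k\<in>V. \<Sum>l\<in>V. ?d k * ?d l * R k l) - (\<Sum>k\<in>V. \<Sum>l\<in>V. ?d k * ?d l * R j0 l)"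
      by (simp add: sum.distrib sum_subtractf)
    also have "(\<Sum>k\<in>V. \<Sum>l\<in>V. ?d k * ?d l * R j0 k) = (\<Sum>k\<in>V. \<Sum>l\<in>V. ?d k * ?d l * R j0 l)"
    proof -
      have "(\<Sum>k\<in>V. \<Sum>l\<in>V. ?d k * ?d l * R j0 k) = (\<Sum>l\<in>V. \<Sum>k\<in>V. ?d k * ?d l * R j0 k)" by (rule sum.swap)
      then show ?thesis by (simp add: mult.commute)
    qed
    finally show ?thesis by simp
  qed
  finally show ?thesis by (simp add: field_simps)
qed

end


lemma alg1:
  fixes d D e P2 pl pj a b ss :: real
  assumes "ss \<noteq> 0"
  shows "(d*D + d - 2 + e) - (P2 - 2*pl*(d*pj - a + b) + d*pl^2)/ss =
     d*(D - (pj - pl)^2/ss) - (2 - d - (d*pj^2 - P2)/ss) + e - 2*pl*(a - b)/ss"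
  using assms by (simp add: field_simps power2_eq_square)

lemma alg2:
  fixes a b ss :: real
  assumes "ss \<noteq> 0"
  shows "(b - (- (ss - 1) / 2 - (b - a) / 2)^2 / ss) - (a - ((ss - 1) / 2 - (b - a) / 2)^2 / ss) - 2 * ((b - a) / 2) / ss = 0"
  using assms by (simp add: field_simps power2_eq_square)

locale kset = tree +
  fixes u v
  assumes uV: "u \<in> V" and vV: "v \<in> V" and uv: "u \<noteq> v" and nadj: "\<not> adj E u v"
    and n4: "4 \<le> card V"
begin

abbreviation "G \<equiv> insert {u, v} E"

lemma adjG: "adj G a b \<longleftrightarrow> adj E a b \<or> (a = u \<and> b = v) \<or> (a = v \<and> b = u)"
  unfolding adj_def by (auto simp: doubleton_eq_iff)

lemma walkG: "walk E xs \<Longrightarrow> walk G xs" unfolding walk_def using adjG by blast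

lemma G_sgraph: "sgraph V G"
proof
  show "simple_graph V G" using simple uV vV uv unfolding simple_graph_def by auto
  show "connected_graph V G" using conn walkG unfolding connected_graph_def by meson
qed

lemma T_mgraph: "mgraph V E"
  using deg_pos n4 by unfold_locales auto

lemma G_mgraph: "mgraph V G"
proof -
  interpret Gs: sgraph V G by (rule G_sgraph)
  show ?thesis using Gs.deg_pos n4 by unfold_locales auto
qed

lemma nbrsG: "nbrs G k = nbrs E k \<union> (if k = u then {v} else {}) \<union> (if k = v then {u} else {})"
  unfolding nbrs_def using adjG by auto

lemma v_notin: "v \<notin> nbrs E u" and u_notin: "u \<notin> nbrs E v"
  using nadj by (auto simp: nbrs_def adj_sym)

lemma sum_nbrsG: "(\<Sum>i\<in>nbrs G k. f i) = (\<Sum>i\<in>nbrs E k. f i) + (if k = u then f v else 0) + (if k = v then f u else 0)"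
proof -
  consider "k = u" | "k = v" | "k \<noteq> u \<and> k \<noteq> v" by blast
  then show ?thesis
  proof cases
    case 1
    then have "nbrs G k = insert v (nbrs E k)" using nbrsG uv by auto
    then show ?thesis using 1 uv v_notin fin_nbrs by (simp add: add.commute)
  next
    case 2
    then have "nbrs G k = insert u (nbrs E k)" using nbrsG uv by auto
    then show ?thesis using 2 uv u_notin fin_nbrs by (simp add: add.commute)
  next
    case 3
    then show ?thesis using nbrsG by simp
  qed
qed

lemma degG: "real (degree G k) = real (degree E k) + (if k = u then 1 else 0) + (if k = v then 1 else 0)"
  using sum_nbrsG[of "\<lambda>_. (1::real)" k] by (simp add: degree_nbrs)

definition "ss = real (dd u v) + 1"
definition "phi x = (real (dd x v) - real (dd x u)) / 2"
definition "RG x y = real (dd x y) - (phi x - phi y)^2 / ss"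
definition "Lp2 j = real (degree E j) * (phi j)^2 - (\<Sum>i\<in>nbrs E j. (phi i)^2)"
definition "alG j = 2 - real (degree E j) - Lp2 j / ss"

lemma ss_pos: "ss > 0" unfolding ss_def by simp

lemma phi_u: "phi u = (ss - 1) / 2" unfolding phi_def ss_def by simp
lemma phi_v: "phi v = - (ss - 1) / 2" unfolding phi_def ss_def using dist_sym[OF uV vV] by simp

lemma RG_lap:
  assumes jV: "j \<in> V" and lV: "l \<in> V"
  shows "(\<Sum>i\<in>nbrs G j. RG i l) = real (degree G j) * RG j l - alG j + (if j = l then 2 else 0)"
proof -
  let ?d = "real (degree E j)"
  have S1: "(\<Sum>i\<in>nbrs E j. real (dd i l)) = ?d * real (dd j l) + ?d - 2 + (if j = l then 2 else 0)"
    using lap_dist[OF jV lV] .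
  have S2: "(\<Sum>i\<in>nbrs E j. phi i) = ?d * phi j - (if j = u then 1 else 0) + (if j = v then 1 else 0)"
  proof -
    have "(\<Sum>i\<in>nbrs E j. phi i) = ((\<Sum>i\<in>nbrs E j. real (dd i v)) - (\<Sum>i\<in>nbrs E j. real (dd i u))) / 2"
      unfolding phi_def sum_divide_distrib[symmetric] sum_subtractf by simp
    also have "\<dots> = ?d * phi j - (if j = u then 1 else 0) + (if j = v then 1 else 0)"
      unfolding lap_dist[OF jV vV] lap_dist[OF jV uV] phi_def by (auto simp: field_simps)
    finally show ?thesis .
  qed
  have S3: "(\<Sum>i\<in>nbrs E j. (phi i - phi l)^2) = (\<Sum>i\<in>nbrs E j. (phi i)^2) - 2 * phi l * (\<Sum>i\<in>nbrs E j. phi i) + ?d * (phi l)^2"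
    by (simp add: power2_diff sum.distrib sum_subtractf sum_distrib_left degree_nbrs algebra_simps)
  have base: "(\<Sum>i\<in>nbrs E j. RG i l) = (\<Sum>i\<in>nbrs E j. real (dd i l)) - (\<Sum>i\<in>nbrs E j. (phi i - phi l)^2) / ss"
    unfolding RG_def by (simp add: sum_subtractf sum_divide_distrib)
  have Dul: "real (dd u l) = real (dd l u)" and Dvl: "real (dd v l) = real (dd l v)"
    using dist_sym uV vV lV by auto
  have phil: "phi l = (real (dd l v) - real (dd l u)) / 2" unfolding phi_def ..
  have Duv: "real (dd u v) = ss - 1" unfolding ss_def by simp
  have ssne: "ss \<noteq> 0" using ss_pos by simp
  define P2 where "P2 = (\<Sum>i\<in>nbrs E j. (phi i)^2)"
  have Lj: "Lp2 j = ?d * (phi j)^2 - P2" unfolding Lp2_def P2_def ..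
  have main: "(\<Sum>i\<in>nbrs E j. RG i l) = ?d * RG j l - alG j + (if j = l then 2 else 0)
       - 2 * phi l * ((if j = u then 1 else 0) - (if j = v then 1 else 0)) / ss"
  proof -
    have "(\<Sum>i\<in>nbrs E j. RG i l) = (?d * real (dd j l) + ?d - 2 + (if j = l then 2 else 0)) -
        (P2 - 2 * phi l * (?d * phi j - (if j = u then 1 else 0) + (if j = v then 1 else 0)) + ?d * (phi l)^2) / ss"
      unfolding base S1 S3 S2 P2_def ..
    also have "\<dots> = ?d * (real (dd j l) - (phi j - phi l)^2 / ss) - (2 - ?d - (?d * (phi j)^2 - P2) / ss)
        + (if j = l then 2 else 0) - 2 * phi l * ((if j = u then 1 else 0) - (if j = v then 1 else 0)) / ss"
      by (rule alg1[OF ssne])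
    finally show ?thesis unfolding RG_def alG_def Lj .
  qed
  show ?thesis
  proof -
    consider "j = u" | "j = v" | "j \<noteq> u \<and> j \<noteq> v" by blast
    then show ?thesis
    proof cases
      case 1
      then have jv: "j \<noteq> v" using uv by simp
      have "(\<Sum>i\<in>nbrs G j. RG i l) = (\<Sum>i\<in>nbrs E j. RG i l) + RG v l" using sum_nbrsG[of "\<lambda>i. RG i l" j] 1 jv by simp
      moreover have "RG v l - RG u l - 2 * phi l / ss = 0"
        unfolding RG_def phi_u phi_v Dul Dvl phil by (rule alg2[OF ssne])
      ultimately show ?thesis using main 1 jv degG[of j] by (simp add: algebra_simps)
    next
      case 2
      then have ju: "j \<noteq> u" using uv by simp
      have "(\<Sum>i\<in>nbrs G j. RG i l) = (\<Sum>i\<in>nbrs E j. RG i l) + RG u l" using sum_nbrsG[of "\<lambda>i. RG i l" j] 2 ju by simp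
      moreover have "RG v l - RG u l - 2 * phi l / ss = 0"
        unfolding RG_def phi_u phi_v Dul Dvl phil by (rule alg2[OF ssne])
      ultimately show ?thesis using main 2 ju degG[of j] by (simp add: algebra_simps add_divide_distrib)
    next
      case 3
      then show ?thesis using main sum_nbrsG[of "\<lambda>i. RG i l" j] degG[of j] by simp
    qed
  qed
qed

lemma adjG_E: "adj G a b \<Longrightarrow> {a, b} \<noteq> {u, v} \<Longrightarrow> adj E a b"
  using adjG[of a b] by (auto simp: doubleton_eq_iff)

lemma cyc_len:
  assumes xsV: "set xs \<subseteq> V" and cy: "is_cycle G xs" and lc: "length xs = c"
  shows "dd u v + 1 = c"
proof -
  have c3: "3 \<le> c" and dxs: "distinct xs" and adjc: "\<And>i. i < c \<Longrightarrow> adj G (xs ! i) (xs ! ((i + 1) mod c))"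
    using cy lc unfolding is_cycle_def by auto
  obtain i where i: "i < c" "{xs ! i, xs ! ((i + 1) mod c)} = {u, v}"
  proof (rule ccontr)
    assume "\<not> thesis"
    then have "\<forall>i<c. {xs ! i, xs ! ((i + 1) mod c)} \<noteq> {u, v}" using that by blast
    then have "\<forall>i<c. adj E (xs ! i) (xs ! ((i + 1) mod c))" using adjc adjG_E by blast
    then have "is_cycle E xs" using c3 dxs lc unfolding is_cycle_def by auto
    then show False using nocyc xsV by blast
  qed
  define ys where "ys = rotate (Suc i) xs"
  have ly: "length ys = c" and dy: "distinct ys" and sy: "set ys = set xs" unfolding ys_def using lc dxs by auto
  have ynth: "ys ! k = xs ! ((Suc i + k) mod c)" if "k < c" for k
    unfolding ys_def using nth_rotate[of k xs "Suc i"] that lc by simp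
  have y0: "ys ! 0 = xs ! ((i + 1) mod c)" using ynth[of 0] c3 by simp
  have ylast: "ys ! (c - 1) = xs ! i"
  proof -
    have "Suc i + (c - 1) = i + c" using c3 by simp
    then have "(Suc i + (c - 1)) mod c = i" using i(1) by simp
    then show ?thesis using ynth[of "c - 1"] c3 by simp
  qed
  have ends: "{ys ! 0, ys ! (c - 1)} = {u, v}" using i y0 ylast by (simp add: insert_commute)
  have wy: "walk E ys" unfolding walk_def
  proof (intro conjI allI impI)
    show "ys \<noteq> []" using ly c3 by auto
    fix k assume k: "k + 1 < length ys"
    then have k': "k + 1 < c" using ly by simp
    define m where "m = (Suc i + k) mod c"
    have m: "m < c" unfolding m_def using c3 by simp
    have "ys ! (k + 1) = xs ! ((m + 1) mod c)" unfolding m_def using ynth[OF k'] by (simp add: mod_Suc_eq)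
    moreover have "ys ! k = xs ! m" unfolding m_def using ynth k' by simp
    ultimately have aG: "adj G (ys ! k) (ys ! (k + 1))" using adjc[OF m] by simp
    have "{ys ! k, ys ! (k + 1)} \<noteq> {u, v}"
    proof
      assume eq: "{ys ! k, ys ! (k + 1)} = {u, v}"
      then have eq2: "{ys ! k, ys ! (k + 1)} = {ys ! 0, ys ! (c - 1)}" using ends by simp
      have inj: "\<And>a b. a < c \<Longrightarrow> b < c \<Longrightarrow> ys ! a = ys ! b \<Longrightarrow> a = b"
        using nth_eq_iff_index_eq[OF dy] ly by auto
      have c1: "c - 1 < c" "0 < c" using c3 by auto
      have "ys ! (k + 1) = ys ! 0 \<or> ys ! (k + 1) = ys ! (c - 1)" using eq2 by blast
      then have "k + 1 = 0 \<or> k + 1 = c - 1" using inj[OF k'] c1 by blast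
      then have k1: "k + 1 = c - 1" by simp
      have "ys ! k = ys ! 0 \<or> ys ! k = ys ! (c - 1)" using eq2 by blast
      then have "k = 0 \<or> k = c - 1" using inj[of k] k' c1 by force
      then show False using k1 c3 by auto
    qed
    then show "adj E (ys ! k) (ys ! (k + 1))" using aG adjG_E by blast
  qed
  have yne: "ys \<noteq> []" using ly c3 by auto
  have hy: "hd ys = ys ! 0" using yne by (simp add: hd_conv_nth)
  have ly': "last ys = ys ! (c - 1)" using yne ly by (simp add: last_conv_nth)
  have "ys \<noteq> []" using ly c3 by auto
  then have hV: "hd ys \<in> V" using sy xsV hd_in_set[of ys] by auto
  have "c = dd (hd ys) (last ys) + 1" using path_len[OF wy dy hV] ly by simp
  moreover have "dd (hd ys) (last ys) = dd u v"
  proof -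
    have "(hd ys = u \<and> last ys = v) \<or> (hd ys = v \<and> last ys = u)" using ends hy ly' uv by (auto simp: doubleton_eq_iff)
    then show ?thesis using dist_sym[OF uV vV] by auto
  qed
  ultimately show ?thesis by simp
qed

end


lemma sum_real_id: "(\<Sum>i<s. real i) = real s * (real s - 1) / 2"
  by (induction s) (auto simp: field_simps)

lemma sum_real_sq: "(\<Sum>i<s. (real i)^2) = (real s - 1) * real s * (2 * real s - 1) / 6"
  by (induction s) (auto simp: field_simps power2_eq_square)

lemma L1: "(\<Sum>i<s. \<Sum>j<s. \<bar>real i - real j\<bar>) = (real s ^ 3 - real s) / 3"
proof (induction s)
  case 0 then show ?case by simp
next
  case (Suc s)
  have row: "(\<Sum>j<s. \<bar>real s - real j\<bar>) = real s * (real s + 1) / 2"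
  proof -
    have "(\<Sum>j<s. \<bar>real s - real j\<bar>) = (\<Sum>j<s. real s - real j)" by (intro sum.cong) auto
    also have "\<dots> = real s * real s - real s * (real s - 1) / 2" by (simp add: sum_subtractf sum_real_id)
    finally show ?thesis by (simp add: field_simps)
  qed
  have col: "(\<Sum>i<s. \<bar>real i - real s\<bar>) = real s * (real s + 1) / 2"
    using row by (simp add: abs_minus_commute)
  have "(\<Sum>i<Suc s. \<Sum>j<Suc s. \<bar>real i - real j\<bar>) =
      (\<Sum>i<s. \<Sum>j<s. \<bar>real i - real j\<bar>) + (\<Sum>i<s. \<bar>real i - real s\<bar>) + (\<Sum>j<s. \<bar>real s - real j\<bar>)"
    by (simp add: sum.distrib)
  also have "\<dots> = (real s ^ 3 - real s) / 3 + real s * (real s + 1) / 2 + real s * (real s + 1) / 2"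
    by (simp only: Suc.IH row col)
  finally show ?case by (simp add: field_simps power3_eq_cube)
qed

lemma L2: "(\<Sum>i<s. \<bar>c - real i\<bar>) \<ge> (real s ^ 2 - 1) / 4"
proof (induction s arbitrary: c rule: nat_induct2)
  case 0 then show ?case by simp
next
  case 1 then show ?case by simp
next
  case (step s)
  have "(\<Sum>i<s + 2. \<bar>c - real i\<bar>) = \<bar>c\<bar> + (\<Sum>i<s. \<bar>(c - 1) - real i\<bar>) + \<bar>c - real (s + 1)\<bar>"
  proof -
    have "(\<Sum>i<s + 2. \<bar>c - real i\<bar>) = (\<Sum>i<Suc (Suc s). \<bar>c - real i\<bar>)" by simp
    also have "\<dots> = \<bar>c - real 0\<bar> + (\<Sum>i<Suc s. \<bar>c - real (Suc i)\<bar>)" by (rule sum.lessThan_Suc_shift)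
    also have "(\<Sum>i<Suc s. \<bar>c - real (Suc i)\<bar>) = (\<Sum>i<s. \<bar>c - real (Suc i)\<bar>) + \<bar>c - real (Suc s)\<bar>" by simp
    finally show ?thesis by (simp add: algebra_simps)
  qed
  moreover have "\<bar>c\<bar> + \<bar>c - real (s + 1)\<bar> \<ge> real s + 1" by linarith
  moreover have "(\<Sum>i<s. \<bar>(c - 1) - real i\<bar>) \<ge> (real s ^ 2 - 1) / 4" by (rule step.IH)
  ultimately have "(\<Sum>i<s + 2. \<bar>c - real i\<bar>) \<ge> real s + 1 + (real s ^ 2 - 1) / 4" by linarith
  then show ?case by (simp add: field_simps power2_eq_square)
qed

lemma L3: "(\<Sum>i<s. (c - real i)^2) \<ge> real s * (real s ^ 2 - 1) / 12"
proof -
  have "(\<Sum>i<s. (c - real i)^2) = (\<Sum>i<s. c^2 - 2 * c * real i + (real i)^2)"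
    by (intro sum.cong) (auto simp: power2_diff)
  also have "\<dots> = real s * c^2 - 2 * c * (real s * (real s - 1) / 2) + (real s - 1) * real s * (2 * real s - 1) / 6"
    by (simp add: sum.distrib sum_subtractf sum_distrib_left[symmetric] sum_real_id sum_real_sq)
  also have "\<dots> = real s * (c - (real s - 1) / 2)^2 + real s * (real s ^ 2 - 1) / 12"
    by (simp add: field_simps power2_eq_square)
  finally show ?thesis by simp
qed

lemma L4: "3 * (\<Sum>i<L. real i * (real i + 1)) = real L ^ 3 - real L"
  by (induction L) (auto simp: field_simps power3_eq_cube)

lemma absab: "\<bar>a\<bar> \<le> d \<Longrightarrow> \<bar>b\<bar> \<le> d \<Longrightarrow> \<bar>(a + b) / 2\<bar> + \<bar>(a - b) / 2\<bar> \<le> (d::real)"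
  by (cases "a \<ge> 0"; cases "b \<ge> 0"; cases "a + b \<ge> 0"; cases "a - b \<ge> 0") (auto simp: field_simps)



context kset begin

definition "hh x = (real (dd x u) + real (dd x v) - (ss - 1)) / 2"
definition "pp x = (ss + 1 + real (dd x u) - real (dd x v)) / 2"
definition "hn x = (dd x u + dd x v - dd u v) div 2"

lemma tri_uv: "x \<in> V \<Longrightarrow> dd u v \<le> dd x u + dd x v"
  using dist_triangle[OF uV _ vV, of x] dist_sym[OF uV, of x] by simp

lemma hn_real: assumes xV: "x \<in> V" shows "real (hn x) = hh x"
proof -
  have e: "even (dd x u + dd x v + dd u v)" using dist_parity[OF uV vV xV] .
  have t: "dd u v \<le> dd x u + dd x v" using tri_uv[OF xV] .
  have "dd x u + dd x v + dd u v = (dd x u + dd x v - dd u v) + 2 * dd u v" using t by simp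
  then have e2: "even (dd x u + dd x v - dd u v)" using e by (metis even_add even_mult_iff even_numeral)
  obtain m where m: "dd x u + dd x v - dd u v = 2 * m" using e2 by (metis dvd_def)
  have "hn x = m" unfolding hn_def m by simp
  then have "real (hn x) = real (dd x u + dd x v - dd u v) / 2" using m by simp
  also have "\<dots> = hh x" unfolding hh_def ss_def using t by (simp add: of_nat_diff)
  finally show ?thesis .
qed

lemma hn_u: "hn u = 0" unfolding hn_def by simp

lemma closer_hn: assumes xV: "x \<in> V" and a: "adj E x y" and c: "dd y u + 1 = dd x u"
  shows "hn y = hn x \<or> hn y + 1 = hn x"
proof -
  have yV: "y \<in> V" using adjD a by auto
  have "dd y v = dd x v + 1 \<or> dd x v = dd y v + 1" using dist_nbr[OF a vV] .
  then have "hh y = hh x \<or> hh y + 1 = hh x" unfolding hh_def using c by (auto simp: field_simps)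
  then show ?thesis using hn_real[OF xV] hn_real[OF yV] by (metis of_nat_1 of_nat_add of_nat_eq_iff)
qed

lemma ivt: "x \<in> V \<Longrightarrow> 1 \<le> j \<Longrightarrow> j \<le> hn x \<Longrightarrow> \<exists>y\<in>V. hn y = j"
proof (induction "dd x u" arbitrary: x)
  case 0
  then have "x = u" using dist_zero uV by metis
  then show ?case using 0 hn_u by simp
next
  case (Suc m)
  show ?case
  proof (cases "j = hn x")
    case True then show ?thesis using Suc.prems by blast
  next
    case False
    have "x \<noteq> u" using Suc.hyps(2) by auto
    then obtain y where y: "adj E x y" "dd y u + 1 = dd x u" using closer_nbr Suc.prems(1) uV by blast
    have yV: "y \<in> V" using adjD y by auto
    have "j \<le> hn y" using closer_hn[OF Suc.prems(1) y] False Suc.prems(3) by auto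
    then show ?thesis using Suc.hyps(1)[of y] y Suc.hyps(2) yV Suc.prems(2) by simp
  qed
qed

definition "gg = (SOME g. walk E g \<and> hd g = u \<and> last g = v \<and> length g = dd u v + 1)"

lemma gg: "walk E gg" "hd gg = u" "last gg = v" "length gg = dd u v + 1"
proof -
  have "\<exists>g. walk E g \<and> hd g = u \<and> last g = v \<and> length g = dd u v + 1" using geo_exists uV vV by blast
  then have "walk E gg \<and> hd gg = u \<and> last gg = v \<and> length gg = dd u v + 1"
    unfolding gg_def by (rule someI_ex)
  then show "walk E gg" "hd gg = u" "last gg = v" "length gg = dd u v + 1" by auto
qed

lemma gg_dist: "distinct gg" using geo_distinct[OF gg uV] .

lemma gg_nth: assumes i: "i < length gg"
  shows "dd (gg ! i) u = i" "dd (gg ! i) v = dd u v - i" "gg ! i \<in> V"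
proof -
  show gV: "gg ! i \<in> V" using geo_prefix(3)[OF gg uV i] .
  show "dd (gg ! i) u = i" using geo_prefix(1)[OF gg uV i] dist_sym[OF uV gV] by simp
  show "dd (gg ! i) v = dd u v - i" using geo_prefix(2)[OF gg uV i] .
qed

lemma gg_set: "set gg \<subseteq> V" using gg_nth by (auto simp: in_set_conv_nth)

lemma hn_gg: "x \<in> set gg \<Longrightarrow> hn x = 0"
proof -
  assume "x \<in> set gg"
  then obtain i where i: "i < length gg" "x = gg ! i" by (auto simp: in_set_conv_nth)
  then have "i \<le> dd u v" using gg by simp
  then show "hn x = 0" unfolding hn_def using gg_nth[OF i(1)] i by simp
qed

definition "LL = card V - (dd u v + 1)"

lemma card_P: "card (set gg) = dd u v + 1" using distinct_card[OF gg_dist] gg by simp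

lemma card_H: "card (V - set gg) = LL"
  unfolding LL_def using card_Diff_subset[OF _ gg_set] card_P by simp

lemma count_bound:
  assumes k: "1 \<le> k" and ne: "{x \<in> V. k \<le> hn x} \<noteq> {}"
  shows "card {x \<in> V. k \<le> hn x} + (k - 1) \<le> LL"
proof -
  define A where "A = {x \<in> V. k \<le> hn x}"
  define B where "B = {y \<in> V. 1 \<le> hn y \<and> hn y < k}"
  obtain x0 where x0: "x0 \<in> V" "k \<le> hn x0" using ne by auto
  have "{1..<k} \<subseteq> hn ` B"
  proof
    fix j assume "j \<in> {1..<k}"
    then obtain y where "y \<in> V" "hn y = j" using ivt[OF x0(1), of j] x0 by auto
    then show "j \<in> hn ` B" unfolding B_def using \<open>j \<in> {1..<k}\<close> by auto
  qed
  moreover have fB: "finite B" unfolding B_def using finV by simp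
  ultimately have "k - 1 \<le> card B"
    using card_mono[OF finite_imageI[OF fB]] card_image_le[OF fB, of hn] by fastforce
  moreover have fA: "finite A" unfolding A_def using finV by simp
  moreover have "A \<inter> B = {}" unfolding A_def B_def by auto
  moreover have "A \<union> B \<subseteq> V - set gg" unfolding A_def B_def using hn_gg k by fastforce
  ultimately have "card A + (k - 1) \<le> card (V - set gg)"
    using card_Un_disjoint[OF fA fB] card_mono[of "V - set gg" "A \<union> B"] finV by fastforce
  then show ?thesis unfolding A_def card_H .
qed

lemma hn_le_L: assumes xV: "x \<in> V" shows "hn x \<le> LL"
proof (cases "hn x = 0")
  case True then show ?thesis by simp
next
  case False
  have "{y \<in> V. hn x \<le> hn y} \<noteq> {}" using xV by auto
  moreover have "card {y \<in> V. hn x \<le> hn y} \<ge> 1"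
  proof -
    have "x \<in> {y \<in> V. hn x \<le> hn y}" "finite {y \<in> V. hn x \<le> hn y}" using xV finV by auto
    then have "card {y \<in> V. hn x \<le> hn y} > 0" using card_gt_0_iff by blast
    then show ?thesis by simp
  qed
  ultimately show ?thesis using count_bound[of "hn x"] False by fastforce
qed

lemma B3: "(\<Sum>x\<in>V. \<Sum>y\<in>V. real (min (hn x) (hn y))) - (\<Sum>x\<in>V. real (hn x)) \<le> (real LL ^ 3 - real LL) / 3"
proof -
  define Gk where "Gk k = card {x \<in> V. k \<le> hn x}" for k
  have ind: "real a = (\<Sum>k\<in>{1..LL}. if k \<le> a then 1 else 0)" if "a \<le> LL" for a
  proof -
    have "(\<Sum>k\<in>{1..LL}. if k \<le> a then (1::real) else 0) = real (card {k \<in> {1..LL}. k \<le> a})"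
      by (simp add: sum.inter_filter[symmetric])
    also have "{k \<in> {1..LL}. k \<le> a} = {1..a}" using that by auto
    finally show ?thesis by simp
  qed
  have Gr: "real (Gk k) = (\<Sum>x\<in>V. if k \<le> hn x then 1 else 0)" for k
    unfolding Gk_def using finV by (simp add: sum.inter_filter[symmetric])
  have "(\<Sum>x\<in>V. \<Sum>y\<in>V. real (min (hn x) (hn y))) =
      (\<Sum>x\<in>V. \<Sum>y\<in>V. \<Sum>k\<in>{1..LL}. (if k \<le> hn x then 1 else 0) * (if k \<le> hn y then 1 else 0))"
  proof (intro sum.cong refl)
    fix x y assume "x \<in> V" "y \<in> V"
    then have "min (hn x) (hn y) \<le> LL" using hn_le_L by (simp add: min.coboundedI1)
    moreover have "(\<Sum>k\<in>{1..LL}. if k \<le> min (hn x) (hn y) then (1::real) else 0) =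
        (\<Sum>k\<in>{1..LL}. (if k \<le> hn x then 1 else 0) * (if k \<le> hn y then 1 else 0))"
      by (intro sum.cong) auto
    ultimately show "real (min (hn x) (hn y)) = (\<Sum>k\<in>{1..LL}. (if k \<le> hn x then 1 else 0) * (if k \<le> hn y then 1 else 0))"
      using ind[of "min (hn x) (hn y)"] by simp
  qed
  also have "\<dots> = (\<Sum>x\<in>V. \<Sum>k\<in>{1..LL}. \<Sum>y\<in>V. (if k \<le> hn x then 1 else 0) * (if k \<le> hn y then 1 else 0))"
    by (intro sum.cong refl) (rule sum.swap)
  also have "\<dots> = (\<Sum>k\<in>{1..LL}. \<Sum>x\<in>V. \<Sum>y\<in>V. (if k \<le> hn x then 1 else 0) * (if k \<le> hn y then 1 else 0))"
    by (rule sum.swap)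
  also have "\<dots> = (\<Sum>k\<in>{1..LL}. real (Gk k) ^ 2)"
    by (simp add: Gr power2_eq_square sum_product)
  finally have M: "(\<Sum>x\<in>V. \<Sum>y\<in>V. real (min (hn x) (hn y))) = (\<Sum>k\<in>{1..LL}. real (Gk k) ^ 2)" .
  have "(\<Sum>x\<in>V. real (hn x)) = (\<Sum>x\<in>V. \<Sum>k\<in>{1..LL}. if k \<le> hn x then 1 else 0)"
    using ind hn_le_L by (intro sum.cong) auto
  also have "\<dots> = (\<Sum>k\<in>{1..LL}. \<Sum>x\<in>V. if k \<le> hn x then 1 else 0)" by (rule sum.swap)
  also have "\<dots> = (\<Sum>k\<in>{1..LL}. real (Gk k))" by (simp add: Gr)
  finally have H: "(\<Sum>x\<in>V. real (hn x)) = (\<Sum>k\<in>{1..LL}. real (Gk k))" .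
  have trm: "real (Gk k) ^ 2 - real (Gk k) \<le> real ((LL + 1 - k) * (LL - k))" if k: "k \<in> {1..LL}" for k
  proof (cases "Gk k = 0")
    case True then show ?thesis by simp
  next
    case False
    then have "{x \<in> V. k \<le> hn x} \<noteq> {}" unfolding Gk_def by (metis card.empty)
    then have "Gk k + (k - 1) \<le> LL" unfolding Gk_def using count_bound k by auto
    then have g: "Gk k \<le> LL + 1 - k" using k by auto
    have "Gk k * (Gk k - 1) \<le> (LL + 1 - k) * (LL + 1 - k - 1)" using g by (intro mult_le_mono) auto
    moreover have "real (Gk k) ^ 2 - real (Gk k) = real (Gk k * (Gk k - 1))" using False
      by (simp add: of_nat_diff power2_eq_square algebra_simps)
    moreover have "LL + 1 - k - 1 = LL - k" by simp
    ultimately show ?thesis by (metis of_nat_le_iff)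
  qed
  have "(\<Sum>k\<in>{1..LL}. real (Gk k) ^ 2) - (\<Sum>k\<in>{1..LL}. real (Gk k)) \<le> (\<Sum>k\<in>{1..LL}. real ((LL + 1 - k) * (LL - k)))"
    unfolding sum_subtractf[symmetric] by (rule sum_mono) (rule trm)
  also have "(\<Sum>k\<in>{1..LL}. real ((LL + 1 - k) * (LL - k))) = (\<Sum>j<LL. real ((LL - j) * (LL - Suc j)))"
    by (simp add: sum.atLeast1_atMost_eq)
  also have "\<dots> = (\<Sum>j<LL. real (LL - Suc j) * (real (LL - Suc j) + 1))"
    by (intro sum.cong refl) (auto simp: of_nat_diff)
  also have "\<dots> = (\<Sum>j<LL. real j * (real j + 1))"
    using sum.nat_diff_reindex[of "\<lambda>j. real j * (real j + 1)" LL] by simp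
  also have "\<dots> = (real LL ^ 3 - real LL) / 3" using L4[of LL] by simp
  finally show ?thesis using M H by simp
qed

end


lemma sum_e:
  fixes g :: "'a \<Rightarrow> real"
  assumes fin: "finite V" and uV: "u \<in> V" and vV: "v \<in> V" and uv: "u \<noteq> v"
  shows "(\<Sum>l\<in>V. ((if l = u then 1 else 0) + (if l = v then 1 else 0)) * g l) = g u + g v"
proof -
  have "(\<Sum>l\<in>V. ((if l = u then 1 else 0) + (if l = v then 1 else 0)) * g l) =
      (\<Sum>l\<in>V. (if l = u then g l else 0)) + (\<Sum>l\<in>V. (if l = v then g l else 0))"
    unfolding sum.distrib[symmetric] by (intro sum.cong) auto
  also have "\<dots> = g u + g v" using fin uV vV by (simp add: sum.delta')
  finally show ?thesis .
qed

lemma expand_w: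
  fixes w :: "'a \<Rightarrow> real" and f :: "'a \<Rightarrow> 'a \<Rightarrow> real"
  assumes fin: "finite V" and uV: "u \<in> V" and vV: "v \<in> V" and uv: "u \<noteq> v"
    and fsym: "\<And>x y. x \<in> V \<Longrightarrow> y \<in> V \<Longrightarrow> f x y = f y x" and fuu: "f u u = 0" and fvv: "f v v = 0"
  shows "(\<Sum>k\<in>V. \<Sum>l\<in>V. (w k + ((if k = u then 1 else 0) + (if k = v then 1 else 0))) *
            (w l + ((if l = u then 1 else 0) + (if l = v then 1 else 0))) * f k l)
     = (\<Sum>k\<in>V. \<Sum>l\<in>V. w k * w l * f k l) + 2 * (\<Sum>k\<in>V. w k * f k u) + 2 * (\<Sum>k\<in>V. w k * f k v) + 2 * f u v"
proof -
  define e where "e k = ((if k = u then 1 else 0) + (if k = v then 1 else 0) :: real)" for k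
  have se: "(\<Sum>l\<in>V. e l * g l) = g u + g v" for g :: "'a \<Rightarrow> real" unfolding e_def using sum_e[OF fin uV vV uv] .
  have "(\<Sum>k\<in>V. \<Sum>l\<in>V. (w k + e k) * (w l + e l) * f k l) =
     (\<Sum>k\<in>V. \<Sum>l\<in>V. w k * w l * f k l) + (\<Sum>k\<in>V. \<Sum>l\<in>V. w k * (e l * f k l)) +
     (\<Sum>k\<in>V. e k * (\<Sum>l\<in>V. w l * f k l)) + (\<Sum>k\<in>V. e k * (\<Sum>l\<in>V. e l * f k l))"
    by (simp add: sum.distrib algebra_simps sum_distrib_left)
  also have "(\<Sum>k\<in>V. \<Sum>l\<in>V. w k * (e l * f k l)) = (\<Sum>k\<in>V. w k * (f k u + f k v))"
    by (simp add: sum_distrib_left[symmetric] se)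
  also have "(\<Sum>k\<in>V. e k * (\<Sum>l\<in>V. w l * f k l)) = (\<Sum>l\<in>V. w l * f u l) + (\<Sum>l\<in>V. w l * f v l)"
    by (rule se)
  also have "(\<Sum>l\<in>V. w l * f u l) = (\<Sum>l\<in>V. w l * f l u)" using fsym uV by (intro sum.cong) auto
  also have "(\<Sum>l\<in>V. w l * f v l) = (\<Sum>l\<in>V. w l * f l v)" using fsym vV by (intro sum.cong) auto
  also have "(\<Sum>k\<in>V. e k * (\<Sum>l\<in>V. e l * f k l)) = (f u u + f u v) + (f v u + f v v)"
    by (simp add: se)
  finally show ?thesis unfolding e_def using fsym[OF uV vV] fuu fvv
    by (simp add: sum.distrib distrib_left algebra_simps)
qed

lemma wvar:
  fixes w x :: "'a \<Rightarrow> real"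
  assumes fin: "finite V" and W: "W = (\<Sum>k\<in>V. w k)" and Wn: "W \<noteq> 0" and a: "a = (\<Sum>k\<in>V. w k * x k) / W"
  shows "(\<Sum>k\<in>V. \<Sum>l\<in>V. w k * w l * (x k - x l)^2) = 2 * W * (\<Sum>k\<in>V. w k * (x k - a)^2)"
proof -
  define y where "y k = x k - a" for k
  have sy: "(\<Sum>k\<in>V. w k * y k) = 0"
  proof -
    have "(\<Sum>k\<in>V. w k * y k) = (\<Sum>k\<in>V. w k * x k) - a * W"
      unfolding y_def W by (simp add: right_diff_distrib sum_subtractf sum_distrib_left mult.commute)
    then show ?thesis using a Wn by simp
  qed
  have "(\<Sum>k\<in>V. \<Sum>l\<in>V. w k * w l * (x k - x l)^2) = (\<Sum>k\<in>V. \<Sum>l\<in>V. w k * w l * (y k - y l)^2)"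
    unfolding y_def by simp
  also have "\<dots> = (\<Sum>k\<in>V. \<Sum>l\<in>V. w l * (w k * (y k)^2)) + (\<Sum>k\<in>V. \<Sum>l\<in>V. w k * (w l * (y l)^2))
       - 2 * ((\<Sum>k\<in>V. w k * y k) * (\<Sum>l\<in>V. w l * y l))"
    by (simp add: power2_diff sum.distrib sum_subtractf sum_distrib_left sum_product algebra_simps)
  also have "\<dots> = 2 * W * (\<Sum>k\<in>V. w k * (y k)^2)"
    using sy unfolding W by (simp add: sum_distrib_left[symmetric] sum_distrib_right[symmetric] sum.swap[of _ V V])
  finally show ?thesis unfolding y_def .
qed

lemma split_sum:
  fixes F :: "'a \<Rightarrow> 'a \<Rightarrow> real"
  assumes fin: "finite V" and P: "P \<subseteq> V" and nn: "\<And>x y. x \<in> V \<Longrightarrow> y \<in> V \<Longrightarrow> F x y \<ge> 0"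
    and sym: "\<And>x y. x \<in> V \<Longrightarrow> y \<in> V \<Longrightarrow> F x y = F y x"
  shows "(\<Sum>x\<in>V. \<Sum>y\<in>V. F x y) \<ge> (\<Sum>x\<in>P. \<Sum>y\<in>P. F x y) + 2 * (\<Sum>x\<in>V - P. \<Sum>y\<in>P. F x y)"
proof -
  have sp: "(\<Sum>x\<in>V. g x) = (\<Sum>x\<in>V - P. g x) + (\<Sum>x\<in>P. g x)" for g :: "'a \<Rightarrow> real"
    using sum.subset_diff[OF P fin] .
  have finP: "finite P" using fin P finite_subset by blast
  have "(\<Sum>x\<in>V. \<Sum>y\<in>V. F x y) = (\<Sum>x\<in>V - P. \<Sum>y\<in>V - P. F x y) + (\<Sum>x\<in>V - P. \<Sum>y\<in>P. F x y)
       + (\<Sum>x\<in>P. \<Sum>y\<in>V - P. F x y) + (\<Sum>x\<in>P. \<Sum>y\<in>P. F x y)"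
    by (simp add: sp sum.distrib)
  moreover have "(\<Sum>x\<in>P. \<Sum>y\<in>V - P. F x y) = (\<Sum>x\<in>V - P. \<Sum>y\<in>P. F x y)"
  proof -
    have "(\<Sum>x\<in>P. \<Sum>y\<in>V - P. F x y) = (\<Sum>y\<in>V - P. \<Sum>x\<in>P. F x y)" by (rule sum.swap)
    also have "\<dots> = (\<Sum>y\<in>V - P. \<Sum>x\<in>P. F y x)" using sym P by (intro sum.cong refl) auto
    finally show ?thesis .
  qed
  moreover have "(\<Sum>x\<in>V - P. \<Sum>y\<in>V - P. F x y) \<ge> 0" using nn by (intro sum_nonneg) auto
  ultimately show ?thesis by linarith
qed



context kset begin

lemma sn_le: "dd u v + 1 \<le> card V" using card_P card_mono[OF finV gg_set] by simp

lemma ss_nat: "ss = real (dd u v + 1)" unfolding ss_def by simp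

lemma hp_le: assumes xV: "x \<in> V" and yV: "y \<in> V"
  shows "\<bar>hh x - hh y\<bar> + \<bar>pp x - pp y\<bar> \<le> real (dd x y)"
proof -
  have s: "dd y x = dd x y" using dist_sym xV yV by simp
  have a: "\<bar>real (dd x u) - real (dd y u)\<bar> \<le> real (dd x y)"
    using dist_triangle[OF xV yV uV] dist_triangle[OF yV xV uV] s by linarith
  have b: "\<bar>real (dd x v) - real (dd y v)\<bar> \<le> real (dd x y)"
    using dist_triangle[OF xV yV vV] dist_triangle[OF yV xV vV] s by linarith
  have e1: "hh x - hh y = ((real (dd x u) - real (dd y u)) + (real (dd x v) - real (dd y v))) / 2"
    unfolding hh_def by (simp add: field_simps)
  have e2: "pp x - pp y = ((real (dd x u) - real (dd y u)) - (real (dd x v) - real (dd y v))) / 2"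
    unfolding pp_def by (simp add: field_simps)
  show ?thesis unfolding e1 e2 using absab[OF a b] .
qed

lemma gg_vals: assumes i: "i < length gg"
  shows "pp (gg ! i) = real i + 1" "phi (gg ! i) = real (dd u v) / 2 - real i"
proof -
  have le: "i \<le> dd u v" using i gg by simp
  show "pp (gg ! i) = real i + 1" unfolding pp_def ss_def using gg_nth[OF i] le by (simp add: of_nat_diff field_simps)
  show "phi (gg ! i) = real (dd u v) / 2 - real i" unfolding phi_def using gg_nth[OF i] le by (simp add: of_nat_diff field_simps)
qed

lemma sum_gg: "(\<Sum>y\<in>set gg. f y) = (\<Sum>i<dd u v + 1. f (gg ! i))"
proof -
  have "bij_betw ((!) gg) {..<length gg} (set gg)" by (rule bij_betw_nth[OF gg_dist refl refl])
  then show ?thesis using sum.reindex_bij_betw[of "(!) gg" "{..<length gg}" "set gg" f] gg by simp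
qed

lemma B4: "(\<Sum>x\<in>V. \<Sum>y\<in>V. \<bar>pp x - pp y\<bar>) \<ge> (ss ^ 3 - ss) / 3 + real LL * (ss ^ 2 - 1) / 2"
proof -
  let ?s = "dd u v + 1"
  have "(\<Sum>x\<in>V. \<Sum>y\<in>V. \<bar>pp x - pp y\<bar>) \<ge> (\<Sum>x\<in>set gg. \<Sum>y\<in>set gg. \<bar>pp x - pp y\<bar>) + 2 * (\<Sum>x\<in>V - set gg. \<Sum>y\<in>set gg. \<bar>pp x - pp y\<bar>)"
    by (rule split_sum[OF finV gg_set]) (auto simp: abs_minus_commute)
  moreover have "(\<Sum>x\<in>set gg. \<Sum>y\<in>set gg. \<bar>pp x - pp y\<bar>) = (ss ^ 3 - ss) / 3"
  proof -
    have "(\<Sum>x\<in>set gg. \<Sum>y\<in>set gg. \<bar>pp x - pp y\<bar>) = (\<Sum>i<?s. \<Sum>j<?s. \<bar>pp (gg ! i) - pp (gg ! j)\<bar>)"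
      by (simp add: sum_gg)
    also have "\<dots> = (\<Sum>i<?s. \<Sum>j<?s. \<bar>real i - real j\<bar>)"
      using gg gg_vals by (intro sum.cong refl) auto
    also have "\<dots> = (ss ^ 3 - ss) / 3" using L1[of ?s] ss_nat by simp
    finally show ?thesis .
  qed
  moreover have "(\<Sum>x\<in>V - set gg. \<Sum>y\<in>set gg. \<bar>pp x - pp y\<bar>) \<ge> real LL * ((ss ^ 2 - 1) / 4)"
  proof -
    have "(\<Sum>y\<in>set gg. \<bar>pp x - pp y\<bar>) \<ge> (ss ^ 2 - 1) / 4" for x
    proof -
      have "(\<Sum>y\<in>set gg. \<bar>pp x - pp y\<bar>) = (\<Sum>i<?s. \<bar>(pp x - 1) - real i\<bar>)"
        unfolding sum_gg using gg gg_vals by (intro sum.cong refl) (auto simp: algebra_simps)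
      also have "\<dots> \<ge> (real ?s ^ 2 - 1) / 4" by (rule L2)
      finally show ?thesis using ss_nat by simp
    qed
    then have "(\<Sum>x\<in>V - set gg. \<Sum>y\<in>set gg. \<bar>pp x - pp y\<bar>) \<ge> (\<Sum>x\<in>V - set gg. (ss ^ 2 - 1) / 4)"
      by (intro sum_mono) auto
    then show ?thesis using card_H by simp
  qed
  ultimately show ?thesis by linarith
qed

lemma degG_ge: assumes kV: "k \<in> V" shows "real (degree G k) \<ge> 1 + (if k \<in> set gg then 1 else 0)"
proof -
  interpret T: mgraph V E by (rule T_mgraph)
  have d1: "real (degree E k) \<ge> 1" using T.degpos[OF kV] by simp
  show ?thesis
  proof (cases "k \<in> set gg")
    case False then show ?thesis using d1 degG[of k] by simp
  next
    case True
    then obtain i where i: "i < length gg" "k = gg ! i" by (auto simp: in_set_conv_nth)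
    consider "i = 0" | "i = length gg - 1" | "0 < i \<and> i < length gg - 1"
      using i(1) by (cases "i = 0"; cases "i = length gg - 1") auto
    then show ?thesis
    proof cases
      case 1
      then have "k = u" using i gg by (metis hd_conv_nth list.size(3) not_less0)
      then show ?thesis using d1 degG[of k] True by simp
    next
      case 2
      then have "k = v" using i gg by (metis last_conv_nth list.size(3) not_less0)
      then show ?thesis using d1 degG[of k] True uv by simp
    next
      case 3
      have a1: "adj E (gg ! (i - 1)) (gg ! i)" using gg(1) 3 unfolding walk_def
        by (metis Suc_diff_1 Suc_eq_plus1 i(1))
      have a2: "adj E (gg ! i) (gg ! (i + 1))" using gg(1) 3 unfolding walk_def by auto
      have ne: "gg ! (i - 1) \<noteq> gg ! (i + 1)" using gg_dist 3 i(1) nth_eq_iff_index_eq by fastforce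
      have "{gg ! (i - 1), gg ! (i + 1)} \<subseteq> nbrs E k" using a1 a2 i by (auto simp: nbrs_def adj_sym)
      then have "card {gg ! (i - 1), gg ! (i + 1)} \<le> degree E k" unfolding degree_nbrs using card_mono[OF fin_nbrs[of k]] by blast
      then have "degree E k \<ge> 2" using ne by simp
      then show ?thesis using degG[of k] True by (auto split: if_splits)
    qed
  qed
qed

lemma B5: "(\<Sum>k\<in>V. \<Sum>l\<in>V. real (degree G k) * real (degree G l) * (phi k - phi l)^2)
    \<ge> (2/3) * real (card V) * ss * (ss^2 - 1)"
proof -
  interpret T: mgraph V E by (rule T_mgraph)
  let ?w = "\<lambda>k. real (degree G k)"
  define W where "W = (\<Sum>k\<in>V. ?w k)"
  have W: "W = 2 * real (card V)"
  proof -
    have "W = (\<Sum>k\<in>V. real (degree E k)) + (\<Sum>k\<in>V. (if k = u then 1 else 0)) + (\<Sum>k\<in>V. (if k = v then 1 else 0))"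
      unfolding W_def degG by (simp add: sum.distrib)
    also have "\<dots> = 2 * real (card V) - 2 + 1 + 1" using degree_sum uV vV finV by (simp add: sum.delta')
    finally show ?thesis by simp
  qed
  have Wn: "W \<noteq> 0" using W n4 by simp
  define a where "a = (\<Sum>k\<in>V. ?w k * phi k) / W"
  have QE: "(\<Sum>k\<in>V. \<Sum>l\<in>V. ?w k * ?w l * (phi k - phi l)^2) = 2 * W * (\<Sum>k\<in>V. ?w k * (phi k - a)^2)"
    by (rule wvar[OF finV W_def Wn a_def])
  have SB: "(\<Sum>k\<in>V. ?w k * (phi k - a)^2) \<ge> 2 * (ss * (ss^2 - 1) / 12)"
  proof -
    have f1: "(\<Sum>k\<in>V. ?w k * (phi k - a)^2) \<ge> (\<Sum>k\<in>V. (1 + (if k \<in> set gg then 1 else 0)) * (phi k - a)^2)"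
      using degG_ge by (intro sum_mono mult_right_mono) auto
    have f2: "(\<Sum>k\<in>V. (1 + (if k \<in> set gg then 1 else 0)) * (phi k - a)^2) =
        (\<Sum>k\<in>V. (phi k - a)^2) + (\<Sum>k\<in>set gg. (phi k - a)^2)"
    proof -
      have "(\<Sum>k\<in>V. (1 + (if k \<in> set gg then 1 else 0)) * (phi k - a)^2) =
          (\<Sum>k\<in>V. (phi k - a)^2) + (\<Sum>k\<in>V. if k \<in> set gg then (phi k - a)^2 else 0)"
        unfolding sum.distrib[symmetric] by (intro sum.cong) auto
      also have "(\<Sum>k\<in>V. if k \<in> set gg then (phi k - a)^2 else 0) = (\<Sum>k\<in>V \<inter> set gg. (phi k - a)^2)"
        using sum.inter_restrict[OF finV, of "\<lambda>k. (phi k - a)^2" "set gg"] by simp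
      also have "V \<inter> set gg = set gg" using gg_set by blast
      finally show ?thesis .
    qed
    have f3: "(\<Sum>k\<in>V. (phi k - a)^2) \<ge> (\<Sum>k\<in>set gg. (phi k - a)^2)"
      using gg_set finV by (intro sum_mono2) auto
    have f4: "(\<Sum>k\<in>set gg. (phi k - a)^2) \<ge> ss * (ss^2 - 1) / 12"
    proof -
      have "(\<Sum>k\<in>set gg. (phi k - a)^2) = (\<Sum>i<dd u v + 1. ((real (dd u v) / 2 - a) - real i)^2)"
        unfolding sum_gg
      proof (intro sum.cong refl)
        fix i assume "i \<in> {..<dd u v + 1}"
        then have "i < length gg" using gg by simp
        then show "(phi (gg ! i) - a)^2 = ((real (dd u v) / 2 - a) - real i)^2"
          unfolding gg_vals(2)[OF \<open>i < length gg\<close>] by (simp add: algebra_simps)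
      qed
      also have "\<dots> \<ge> real (dd u v + 1) * (real (dd u v + 1) ^ 2 - 1) / 12" by (rule L3)
      finally show ?thesis using ss_nat by simp
    qed
    show ?thesis using f1 f2 f3 f4 by linarith
  qed
  have W0: "2 * W \<ge> 0" using W by simp
  have "(\<Sum>k\<in>V. \<Sum>l\<in>V. ?w k * ?w l * (phi k - phi l)^2) \<ge> 2 * W * (2 * (ss * (ss^2 - 1) / 12))"
    unfolding QE using mult_left_mono[OF SB W0] .
  then show ?thesis unfolding W by (simp add: algebra_simps)
qed

end


context kset begin

lemma sumdG: "(\<Sum>k\<in>V. real (degree G k)) = 2 * real (card V)"
proof -
  have "(\<Sum>k\<in>V. real (degree G k)) = (\<Sum>k\<in>V. real (degree E k)) + (\<Sum>k\<in>V. (if k = u then 1 else 0)) + (\<Sum>k\<in>V. (if k = v then 1 else 0))"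
    unfolding degG by (simp add: sum.distrib)
  also have "\<dots> = 2 * real (card V) - 2 + 1 + 1" using degree_sum uV vV finV by (simp add: sum.delta')
  finally show ?thesis by simp
qed

lemma RG_sym: "x \<in> V \<Longrightarrow> y \<in> V \<Longrightarrow> RG x y = RG y x"
  unfolding RG_def using dist_sym by (simp add: power2_commute)

lemma kem_less:
  assumes cneg: "- (ss ^ 3) - ((real (card V)^2 - 10 * real (card V)) / 3) * ss ^ 2 - (2 * real (card V)^2 + real (card V)) * ss
     + (4 * real (card V)^3 - 5 * real (card V)^2 + 4 * real (card V)) / 3 < 0"
  shows "kemeny V G < kemeny V E"
proof -
  interpret T: mgraph V E by (rule T_mgraph)
  interpret Gm: mgraph V G by (rule G_mgraph)
  define N where "N = real (card V)"
  have N4: "N \<ge> 4" unfolding N_def using n4 by simp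
  let ?d = "\<lambda>k. real (degree E k)"
  let ?dG = "\<lambda>k. real (degree G k)"
  define ST where "ST = (\<Sum>k\<in>V. \<Sum>l\<in>V. ?d k * ?d l * real (dd k l))"
  define SG where "SG = (\<Sum>k\<in>V. \<Sum>l\<in>V. ?dG k * ?dG l * RG k l)"
  have KT: "kemeny V E = ST / (2 * T.Sd)"
    unfolding ST_def
  proof (rule T.kemeny_formula[where \<alpha>="\<lambda>j. 2 - real (degree E j)"])
    show "real (dd x y) = real (dd y x)" if "x \<in> V" "y \<in> V" for x y using dist_sym that by simp
    show "real (dd x x) = 0" for x by simp
    show "(\<Sum>i\<in>nbrs E j. real (dd i l)) = real (degree E j) * real (dd j l) - (2 - real (degree E j)) + (if j = l then 2 else 0)"
      if "j \<in> V" "l \<in> V" for j l using lap_dist[OF that] by simp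
  qed
  have TSd: "T.Sd = 2 * N - 2" unfolding T.Sd_def N_def using degree_sum by simp
  have KG: "kemeny V G = SG / (2 * Gm.Sd)"
    unfolding SG_def
  proof (rule Gm.kemeny_formula[where \<alpha>=alG])
    show "RG x y = RG y x" if "x \<in> V" "y \<in> V" for x y using RG_sym that by simp
    show "RG x x = 0" for x unfolding RG_def by simp
    show "(\<Sum>i\<in>nbrs G j. RG i l) = real (degree G j) * RG j l - alG j + (if j = l then 2 else 0)"
      if "j \<in> V" "l \<in> V" for j l using RG_lap[OF that] .
  qed
  have GSd: "Gm.Sd = 2 * N" unfolding Gm.Sd_def N_def using sumdG .
    define sig where "sig l = (\<Sum>k\<in>V. real (dd k l))" for l
  define sigt where "sigt = (\<Sum>k\<in>V. sig k)"
  have Wl: "(\<Sum>k\<in>V. ?d k * real (dd k l)) = 2 * sig l - (N - 1)" if "l \<in> V" for l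
    unfolding sig_def N_def using W_ident[OF that] by simp
  have ST_eq: "ST = 4 * sigt - 2 * N * (N - 1) - 2 * (N - 1)^2"
  proof -
    have "ST = (\<Sum>l\<in>V. \<Sum>k\<in>V. ?d k * ?d l * real (dd k l))" unfolding ST_def by (rule sum.swap)
    also have "\<dots> = (\<Sum>l\<in>V. ?d l * (\<Sum>k\<in>V. ?d k * real (dd k l)))"
      by (simp add: sum_distrib_left algebra_simps)
    also have "\<dots> = (\<Sum>l\<in>V. ?d l * (2 * sig l - (N - 1)))" using Wl by (intro sum.cong refl) auto
    also have "\<dots> = (\<Sum>l\<in>V. 2 * (?d l * sig l) - (N - 1) * ?d l)"
      by (intro sum.cong refl) (simp add: algebra_simps)
    also have "\<dots> = 2 * (\<Sum>l\<in>V. ?d l * sig l) - (N - 1) * (\<Sum>l\<in>V. ?d l)"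
      by (simp add: sum_subtractf sum_distrib_left)
    also have "(\<Sum>l\<in>V. ?d l) = 2 * N - 2" using degree_sum N_def by simp
    also have "(\<Sum>l\<in>V. ?d l * sig l) = 2 * sigt - N * (N - 1)"
    proof -
      have "(\<Sum>l\<in>V. ?d l * sig l) = (\<Sum>l\<in>V. \<Sum>k\<in>V. ?d l * real (dd k l))" unfolding sig_def by (simp add: sum_distrib_left)
      also have "\<dots> = (\<Sum>k\<in>V. \<Sum>l\<in>V. ?d l * real (dd k l))" by (rule sum.swap)
      also have "\<dots> = (\<Sum>k\<in>V. \<Sum>l\<in>V. ?d l * real (dd l k))" using dist_sym by (intro sum.cong refl) auto
      also have "\<dots> = (\<Sum>k\<in>V. 2 * sig k - (N - 1))" using Wl by (intro sum.cong refl) auto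
      also have "\<dots> = 2 * sigt - N * (N - 1)" unfolding sigt_def N_def by (simp add: sum_subtractf sum_distrib_left)
      finally show ?thesis .
    qed
    finally show ?thesis by (simp add: algebra_simps power2_eq_square)
  qed
  define Q where "Q = (\<Sum>k\<in>V. \<Sum>l\<in>V. ?dG k * ?dG l * (phi k - phi l)^2)"
  have ssp: "ss > 0" by (rule ss_pos)
  have SG_eq: "SG = ST + 2 * (2 * sig u - (N - 1)) + 2 * (2 * sig v - (N - 1)) + 2 * (ss - 1) - Q / ss"
  proof -
    have "SG = (\<Sum>k\<in>V. \<Sum>l\<in>V. ?dG k * ?dG l * real (dd k l)) - Q / ss"
      unfolding SG_def Q_def RG_def by (simp add: right_diff_distrib sum_subtractf sum_divide_distrib)
    also have "(\<Sum>k\<in>V. \<Sum>l\<in>V. ?dG k * ?dG l * real (dd k l)) =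
       (\<Sum>k\<in>V. \<Sum>l\<in>V. (?d k + ((if k = u then 1 else 0) + (if k = v then 1 else 0))) *
            (?d l + ((if l = u then 1 else 0) + (if l = v then 1 else 0))) * real (dd k l))"
      unfolding degG by (simp add: add.assoc)
    also have "\<dots> = ST + 2 * (\<Sum>k\<in>V. ?d k * real (dd k u)) + 2 * (\<Sum>k\<in>V. ?d k * real (dd k v)) + 2 * real (dd u v)"
      unfolding ST_def by (rule expand_w[OF finV uV vV uv]) (use dist_sym in auto)
    finally show ?thesis using Wl[OF uV] Wl[OF vV] unfolding ss_def by simp
  qed
    define H where "H = (\<Sum>x\<in>V. real (hn x))"
  define Mn where "Mn = (\<Sum>x\<in>V. \<Sum>y\<in>V. real (min (hn x) (hn y)))"
  define P1 where "P1 = (\<Sum>x\<in>V. \<Sum>y\<in>V. \<bar>pp x - pp y\<bar>)"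
  define L where "L = real LL"
  have Ldef: "L = N - ss" unfolding L_def LL_def N_def ss_def using sn_le by (simp add: of_nat_diff)
  have sig_uv: "sig u + sig v = 2 * H + N * (ss - 1)"
  proof -
    have "sig u + sig v = (\<Sum>x\<in>V. real (dd x u) + real (dd x v))" unfolding sig_def by (simp add: sum.distrib)
    also have "\<dots> = (\<Sum>x\<in>V. 2 * real (hn x) + (ss - 1))"
      using hn_real unfolding hh_def by (intro sum.cong refl) (auto simp: field_simps)
    also have "\<dots> = 2 * H + N * (ss - 1)" unfolding H_def N_def by (simp add: sum.distrib sum_distrib_left)
    finally show ?thesis .
  qed
  have sig_lb: "sigt \<ge> 2 * N * H - 2 * Mn + P1"
  proof -
    have "sigt = (\<Sum>x\<in>V. \<Sum>y\<in>V. real (dd x y))"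
      unfolding sigt_def sig_def by (rule sum.swap)
    also have "\<dots> \<ge> (\<Sum>x\<in>V. \<Sum>y\<in>V. \<bar>hh x - hh y\<bar> + \<bar>pp x - pp y\<bar>)"
      using hp_le by (intro sum_mono) auto
    finally have s1: "sigt \<ge> (\<Sum>x\<in>V. \<Sum>y\<in>V. \<bar>hh x - hh y\<bar>) + P1" unfolding P1_def by (simp add: sum.distrib)
    have "(\<Sum>x\<in>V. \<Sum>y\<in>V. \<bar>hh x - hh y\<bar>) = (\<Sum>x\<in>V. \<Sum>y\<in>V. real (hn x) + real (hn y) - 2 * real (min (hn x) (hn y)))"
      using hn_real[symmetric] by (intro sum.cong refl) (auto simp: min_def)
    also have "\<dots> = (\<Sum>x\<in>V. \<Sum>y\<in>V. real (hn x)) + (\<Sum>x\<in>V. \<Sum>y\<in>V. real (hn y)) - 2 * Mn"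
      unfolding Mn_def by (simp add: sum.distrib sum_subtractf sum_distrib_left)
    also have "(\<Sum>x\<in>V. \<Sum>y\<in>V. real (hn x)) = N * H" unfolding H_def N_def by (simp add: sum_distrib_left)
    also have "(\<Sum>x\<in>V. \<Sum>y\<in>V. real (hn y)) = N * H" unfolding H_def N_def by simp
    also have "N * H + N * H - 2 * Mn = 2 * N * H - 2 * Mn" by simp
    finally show ?thesis using s1 by simp
  qed
  have B3': "Mn - H \<le> (L ^ 3 - L) / 3" unfolding Mn_def H_def L_def using B3 .
  have B4': "P1 \<ge> (ss ^ 3 - ss) / 3 + L * (ss ^ 2 - 1) / 2" unfolding P1_def L_def using B4 .
  have B5': "Q \<ge> (2/3) * N * ss * (ss^2 - 1)" unfolding Q_def N_def using B5 .
  have Qs: "(N - 1) * (Q / ss) \<ge> (N - 1) * ((2/3) * N * (ss^2 - 1))"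
  proof -
    have "Q / ss \<ge> (2/3) * N * (ss^2 - 1)" using B5' ssp by (simp add: field_simps)
    then show ?thesis using N4 by (intro mult_left_mono) auto
  qed
  define D0 where "D0 = N * ST - (N - 1) * SG"
  have D0_eq: "D0 = 4 * sigt - 8 * (N - 1) * H - (2 * N * (N - 1) + 2 * (N - 1)^2 + (N - 1) * (4 * N * (ss - 1) - 4 * (N - 1) + 2 * (ss - 1)))
      + (N - 1) * (Q / ss)"
  proof -
    have su: "sig u = 2 * H + N * (ss - 1) - sig v" using sig_uv by (simp add: algebra_simps)
    show ?thesis unfolding D0_def SG_eq ST_eq su by (simp add: algebra_simps)
  qed
  define A3 where "A3 = (L ^ 3 - L) / 3"
  define B4 where "B4 = (ss ^ 3 - ss) / 3 + L * (ss ^ 2 - 1) / 2"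
  define NH where "NH = N * H"
  have lin: "4 * sigt - 8 * (N - 1) * H \<ge> -8 * A3 + 4 * B4"
  proof -
    have e: "8 * (N - 1) * H = 8 * NH - 8 * H" unfolding NH_def by (simp add: algebra_simps)
    have s: "sigt \<ge> 2 * NH - 2 * Mn + P1" using sig_lb unfolding NH_def by (simp add: algebra_simps)
    show ?thesis unfolding e using s B3'[folded A3_def] B4'[folded B4_def] by linarith
  qed
  define C0 where "C0 = 2 * N * (N - 1) + 2 * (N - 1)^2 + (N - 1) * (4 * N * (ss - 1) - 4 * (N - 1) + 2 * (ss - 1))"
  define QQ where "QQ = (N - 1) * (Q / ss)"
  define QL where "QL = (N - 1) * ((2/3) * N * (ss^2 - 1))"
  define SX where "SX = 4 * sigt - 8 * (N - 1) * H"
  have D0': "D0 = SX - C0 + QQ" unfolding D0_eq SX_def C0_def QQ_def ..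
  define CU where "CU = - (ss ^ 3) - ((N^2 - 10 * N) / 3) * ss ^ 2 - (2 * N^2 + N) * ss + (4 * N^3 - 5 * N^2 + 4 * N) / 3"
  have CUn: "CU < 0" using cneg unfolding CU_def N_def .
  have "D0 \<ge> -8 * A3 + 4 * B4 - C0 + QL"
    using D0' lin[folded SX_def] Qs[folded QQ_def QL_def] by linarith
  also have "-8 * A3 + 4 * B4 - C0 + QL = -2 * CU"
    unfolding A3_def B4_def C0_def QL_def CU_def Ldef by (simp add: field_simps power2_eq_square power3_eq_cube)
  finally have "D0 > 0" using CUn by linarith
  then have "(N - 1) * SG < N * ST" unfolding D0_def by simp
  then have "SG / (4 * N) < ST / (4 * (N - 1))" using N4 by (simp add: field_simps)
  then show ?thesis unfolding KT KG TSd GSd by (simp add: algebra_simps)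
qed

end





lemma quad_roots_finite:
  fixes b c :: real
  shows "finite {x. - (x^2) - b * x - c = 0}"
proof (cases "{x. - (x^2) - b * x - c = 0} = {}")
  case True then show ?thesis by simp
next
  case False
  then obtain r where r: "- (r^2) - b * r - c = 0" by auto
  have "{x. - (x^2) - b * x - c = 0} \<subseteq> {r, - r - b}"
  proof
    fix x assume "x \<in> {x. - (x^2) - b * x - c = 0}"
    then have "- (x^2) - b * x - c = 0" by simp
    then have "(x - r) * (- (x + r) - b) = 0" using r by (simp add: algebra_simps power2_eq_square)
    then show "x \<in> {r, - r - b}" by auto
  qed
  then show ?thesis by (rule finite_subset) simp
qed

lemma cubic_roots_finite:
  fixes a2 a1 a0 :: real
  shows "finite {x. - (x^3) - a2 * x^2 - a1 * x + a0 = 0}"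
proof (cases "{x. - (x^3) - a2 * x^2 - a1 * x + a0 = 0} = {}")
  case True then show ?thesis by simp
next
  case False
  then obtain r where r: "- (r^3) - a2 * r^2 - a1 * r + a0 = 0" by auto
  have "{x. - (x^3) - a2 * x^2 - a1 * x + a0 = 0} \<subseteq> insert r {x. - (x^2) - (r + a2) * x - (r^2 + a2 * r + a1) = 0}"
  proof
    fix x assume "x \<in> {x. - (x^3) - a2 * x^2 - a1 * x + a0 = 0}"
    then have "- (x^3) - a2 * x^2 - a1 * x + a0 = 0" by simp
    then have "(x - r) * (- (x^2) - (r + a2) * x - (r^2 + a2 * r + a1)) = 0" using r
      by (simp add: algebra_simps power2_eq_square power3_eq_cube)
    then show "x \<in> insert r {x. - (x^2) - (r + a2) * x - (r^2 + a2 * r + a1) = 0}" by auto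
  qed
  moreover have "finite (insert r {x. - (x^2) - (r + a2) * x - (r^2 + a2 * r + a1) = 0})"
    using quad_roots_finite by simp
  ultimately show ?thesis by (rule finite_subset)
qed


lemma cubic_neg:
  fixes n :: nat and x :: real
  assumes x: "x > cubic_c0 n" and xpos: "x > 0"
  shows "- (x ^ 3) - ((real n^2 - 10 * real n) / 3) * x ^ 2 - (2 * real n^2 + real n) * x
     + (4 * real n^3 - 5 * real n^2 + 4 * real n) / 3 < 0"
proof -
  define a2 where "a2 = (real n^2 - 10 * real n) / 3"
  define a1 where "a1 = 2 * real n^2 + real n"
  define a0 where "a0 = (4 * real n^3 - 5 * real n^2 + 4 * real n) / 3"
  define f where "f y = - (y ^ 3) - a2 * y ^ 2 - a1 * y + a0" for y :: real
  define S where "S = {y::real. y > 0 \<and> - (y ^ 3) - ((real n^2 - 10 * real n) / 3) * y ^ 2 - (2 * real n^2 + real n) * y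
     + (4 * real n^3 - 5 * real n^2 + 4 * real n) / 3 = 0}"
  have c0: "cubic_c0 n = Max S" unfolding cubic_c0_def S_def by simp
  have Sf: "S = {y. y > 0 \<and> f y = 0}" unfolding S_def f_def a2_def a1_def a0_def by simp
  have "finite {y. - (y^3) - a2 * y^2 - a1 * y + a0 = 0}" by (rule cubic_roots_finite)
  then have finS: "finite S" unfolding Sf f_def by (rule finite_subset[rotated]) auto
  have cont: "isCont f y" for y unfolding f_def by (intro continuous_intros)
  show ?thesis
  proof (rule ccontr)
    assume "\<not> ?thesis"
    then have fx: "f x \<ge> 0" unfolding f_def a2_def a1_def a0_def by simp
    define A where "A = \<bar>a2\<bar> + \<bar>a1\<bar> + \<bar>a0\<bar> + 1"
    define y where "y = max (x + 1) A"
    have y1: "y \<ge> 1" and yA: "y \<ge> A" and yx: "y \<ge> x" using xpos unfolding y_def by auto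
    have "f y < 0"
    proof -
      have "- a2 * y ^ 2 \<le> \<bar>a2\<bar> * y ^ 2" using mult_right_mono[of "- a2" "\<bar>a2\<bar>" "y ^ 2"] by simp
      moreover have "- a1 * y \<le> \<bar>a1\<bar> * y ^ 2"
      proof -
        have "- a1 * y \<le> \<bar>a1\<bar> * y" using y1 mult_right_mono[of "- a1" "\<bar>a1\<bar>" y] by simp
        also have "\<dots> \<le> \<bar>a1\<bar> * y ^ 2" using y1 by (intro mult_left_mono) (auto simp: power2_eq_square)
        finally show ?thesis .
      qed
      moreover have "a0 \<le> \<bar>a0\<bar> * y ^ 2" using y1
        by (smt (verit, best) abs_ge_self mult_cancel_left1 mult_left_mono one_le_power)
      ultimately have "f y \<le> - (y ^ 3) + (A - 1) * y ^ 2" unfolding f_def A_def by (simp add: algebra_simps)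
      also have "\<dots> < - (y ^ 3) + y * y ^ 2" using yA y1 by (intro add_strict_left_mono mult_strict_right_mono) auto
      also have "\<dots> = 0" by (simp add: power3_eq_cube power2_eq_square)
      finally show ?thesis .
    qed
    then obtain z where z: "x \<le> z" "z \<le> y" "f z = 0"
      using IVT2[of f y 0 x] fx yx cont by auto
    have "z \<in> S" unfolding Sf using z xpos by auto
    then have "z \<le> Max S" using finS by simp
    then show False using x c0 z by simp
  qed
qed



theorem corollary3p4:
  fixes V :: "'a set" and E :: "'a set set" and u v :: 'a and c :: nat
  assumes tree: "is_tree V E"
    and n4: "card V \<ge> 4"
    and diam: "real (diameter V E) \<ge> cubic_c0 (card V)"
    and uV: "u \<in> V" and vV: "v \<in> V" and uv: "u \<noteq> v" and nadj: "\<not> adj E u v"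
    and cyc: "\<exists>xs. set xs \<subseteq> V \<and> is_cycle (insert {u, v} E) xs \<and> length xs = c"
    and cbig: "real c > cubic_c0 (card V)"
  shows "kemeny V (insert {u, v} E) < kemeny V E"
proof -
  interpret K: kset V E u v
    using tree uV vV uv nadj n4 unfolding is_tree_def
    by unfold_locales auto
  obtain xs where xs: "set xs \<subseteq> V" "is_cycle (insert {u, v} E) xs" "length xs = c" using cyc by blast
  have cl: "graph_dist E u v + 1 = c" by (rule K.cyc_len[OF xs])
  have ssc: "K.ss = real c" unfolding K.ss_def using cl by auto
  have c3: "3 \<le> c" using xs unfolding is_cycle_def by auto
  then have cpos: "real c > 0" by simp
  have "- (real c ^ 3) - ((real (card V)^2 - 10 * real (card V)) / 3) * real c ^ 2 - (2 * real (card V)^2 + real (card V)) * real c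
     + (4 * real (card V)^3 - 5 * real (card V)^2 + 4 * real (card V)) / 3 < 0"
    by (rule cubic_neg[OF cbig cpos])
  then show ?thesis using K.kem_less ssc by simp
qed

end
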